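(* Consider the online bin covering problem with advice, and the advice strategy $\mathsf{DH}^{b+\lg n}_4$ (with $k=4$) described in the context, where the oracle supplies exact values of $m$ and $x_m$ (with $m$ chosen by the oracle, as described, to maximize the number of bins covered by the strategy). Then for every input sequence $\sigma$ of length $n$, $$|\mathsf{DH}^{b+\lg n}_4(\sigma)| \ge \frac{2}{3}\,|\mathsf{OPT}(\sigma)| - \frac{173}{60},$$ where $|\mathsf{OPT}(\sigma)|$ is the maximum number of bins that can be covered with the items of $\sigma$ and $|\mathsf{DH}^{b+\lg n}_4(\sigma)|$ is the number of bins covered by the strategy.
   Context: Bin covering: given a sequence $\sigma$ of items with rational sizes, each item size $v$ satisfying $0<v<1$, partition the items into bins; the load of a bin is the sum of its item sizes and a bin is covered if its load is at least $1$; the goal is to maximize the number of covered bins. Online: items arrive one by one and each must be irrevocably placed in a bin (existing or newly opened) before the next arrives. Advice model: an oracle knowing the entire input and the strategy writes a bit string (using a self-delimiting encoding) on an advice tape which the strategy may read. Dual Next Fit (DNF) on a stream of items: keep one active bin, put each item into it, and when it becomes covered close it and open a new empty active bin. Fix an integer $k\ge 2$. For an integer $2\le t\le k$, an item $v$ is a $t$-item if $1/t\le v<1/(t-1)$; an item $v<1/k$ is small. Let $x_1\ge x_2\ge\dots\ge x_n$ be the items of $\sigma$ sorted in non-increasing order. Strategy $\mathsf{DH}^{b+\lg n}_k$: it first reads from the advice an integer $m$ and the value $x_m$ (the $m$-th largest item of $\sigma$). It opens $m$ critical bins, each with an initial virtual load of $x_m$; it also opens one $t$-bin for each $t\in\{2,\dots,k\}$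 and one small bin. The virtual load of a critical bin equals the sum of its small items plus either $x_m$ (if it contains no item of size $\ge x_m$ yet) or the actual size of the item of size $\ge x_m$ it contains. When an item $v$ arrives: (1) if $x_m\le v$, place $v$ in the next critical bin that does not yet contain such a (2-)item and update its virtual load; (2) if $1/k\le v<x_m$ and $v$ is a $t$-item, place $v$ in the current $t$-bin using DNF (when it becomes covered, close it and open a new $t$-bin); (3) if $v<1/k$, place $v$ in the next critical bin whose virtual load is still below $1$ and update its virtual load; if all critical bins have virtual load at least $1$, place $v$ in the small bin using DNF (when it becomes covered, close it and open a new small bin). The oracle chooses $m$ by emulating the strategy for every integer $0\le m\le n_2$, where $n_2$ is the number of $2$-items in $\sigma$, and reports a value of $m$ for which the strategy covers as many bins as possible, together with the exact value $x_m$. *)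

theory Defs
  imports Main "HOL.Rat"
begin

definition covered_bins :: "rat list \<Rightarrow> (nat \<Rightarrow> nat) \<Rightarrow> nat" where
  "covered_bins xs f =
     card {b. 1 \<le> (\<Sum>i\<in>{i. i < length xs \<and> f i = b}. xs ! i)}"

definition opt_cover :: "rat list \<Rightarrow> nat" where
  "opt_cover xs = Max {c. \<exists>f. c = covered_bins xs f}"

fun upd_first :: "('a \<Rightarrow> bool) \<Rightarrow> ('a \<Rightarrow> 'a) \<Rightarrow> 'a list \<Rightarrow> 'a list" where
  "upd_first P g [] = []"
| "upd_first P g (x # xs) = (if P x then g x # xs else x # upd_first P g xs)"

text \<open>A critical bin is a pair (big, smalls): the item of size at least x_m
it contains (if any) and the total size of its small items.\<close>

definition vload :: "rat \<Rightarrow> rat option \<times> rat \<Rightarrow> rat" where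
  "vload xm b = snd b + (case fst b of None \<Rightarrow> xm | Some y \<Rightarrow> y)"

definition aload :: "rat option \<times> rat \<Rightarrow> rat" where
  "aload b = snd b + (case fst b of None \<Rightarrow> 0 | Some y \<Rightarrow> y)"

text \<open>Dual Next Fit state: (load of the active bin, number of closed = covered bins).\<close>

definition dnf_add :: "rat \<Rightarrow> rat \<times> nat \<Rightarrow> rat \<times> nat" where
  "dnf_add v s = (if 1 \<le> fst s + v then (0, Suc (snd s)) else (fst s + v, snd s))"

text \<open>The class t of an item v with 0 < v < 1 is the t with 1/t \<le> v < 1/(t-1),
i.e. t = ceiling (1/v).\<close>

definition item_class :: "rat \<Rightarrow> nat" where
  "item_class v = nat \<lceil>1 / v\<rceil>"

type_synonym dh_state = "(rat option \<times> rat) list \<times> (nat \<Rightarrow> rat \<times> nat) \<times> (rat \<times> nat)"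

definition dh_step :: "nat \<Rightarrow> rat \<Rightarrow> rat \<Rightarrow> dh_state \<Rightarrow> dh_state" where
  "dh_step k xm v st = (case st of (cr, tb, sb) \<Rightarrow>
     if xm \<le> v \<and> (\<exists>b\<in>set cr. fst b = None)
       then (upd_first (\<lambda>b. fst b = None) (\<lambda>b. (Some v, snd b)) cr, tb, sb)
     else if 1 / of_nat k \<le> v
       then (cr, tb(item_class v := dnf_add v (tb (item_class v))), sb)
     else if (\<exists>b\<in>set cr. vload xm b < 1)
       then (upd_first (\<lambda>b. vload xm b < 1) (\<lambda>b. (fst b, snd b + v)) cr, tb, sb)
     else (cr, tb, dnf_add v sb))"

text \<open>x_m, the m-th largest item (1-based); for m = 0 we use the convention
x_0 = 1 (no critical bins, every item of size \<ge> 1/k goes to its t-bin).\<close>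

definition xm_of :: "rat list \<Rightarrow> nat \<Rightarrow> rat" where
  "xm_of xs m = (if m = 0 then 1 else rev (sort xs) ! (m - 1))"

definition dh_run :: "nat \<Rightarrow> rat list \<Rightarrow> nat \<Rightarrow> nat" where
  "dh_run k xs m =
     (case fold (dh_step k (xm_of xs m)) xs (replicate m (None, 0), (\<lambda>_. (0, 0)), (0, 0)) of
       (cr, tb, sb) \<Rightarrow>
         (\<Sum>t\<in>{2..k}. snd (tb t)) + snd sb + length (filter (\<lambda>b. 1 \<le> aload b) cr))"

definition n_two_items :: "rat list \<Rightarrow> nat" where
  "n_two_items xs = length (filter (\<lambda>v. 1/2 \<le> v) xs)"

definition dh_advice :: "nat \<Rightarrow> rat list \<Rightarrow> nat" where
  "dh_advice k xs = Max (dh_run k xs ` {0..n_two_items xs})"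

end

theory Submission
  imports Defs "HOL-Library.Multiset"
begin


lemma upd_first_conv:
  "\<exists>b\<in>set xs. P b \<Longrightarrow> \<exists>k<length xs. P (xs!k) \<and> (\<forall>l<k. \<not> P (xs!l)) \<and> upd_first P g xs = xs[k := g (xs!k)]"
proof (induction xs)
  case Nil then show ?case by simp
next
  case (Cons a xs)
  show ?case
  proof (cases "P a")
    case True then show ?thesis by (intro exI[of _ 0]) auto
  next
    case False
    with Cons.prems have "\<exists>b\<in>set xs. P b" by auto
    from Cons.IH[OF this] obtain k where k: "k<length xs" "P (xs!k)" "\<forall>l<k. \<not> P (xs!l)" "upd_first P g xs = xs[k := g (xs!k)]" by blast
    show ?thesis
      apply (rule exI[of _ "Suc k"])
      using k False by (auto simp: less_Suc_eq_0_disj)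
  qed
qed

lemma item_class_2: "1/2 \<le> v \<Longrightarrow> v < 1 \<Longrightarrow> item_class v = 2"
proof -
  assume a: "1/2 \<le> v" "v < 1"
  have "v > 0" using a by simp
  have "1 < 1/v" using a \<open>v>0\<close> by (simp add: field_simps)
  moreover have "1/v \<le> 2" using a \<open>v>0\<close> by (simp add: field_simps)
  ultimately have "\<lceil>1/v\<rceil> = 2" by (intro ceiling_unique) auto
  then show ?thesis unfolding item_class_def by simp
qed

lemma item_class_3: "1/3 \<le> v \<Longrightarrow> v < 1/2 \<Longrightarrow> item_class v = 3"
proof -
  assume a: "1/3 \<le> v" "v < 1/2"
  have "v > 0" using a by simp
  have "2 < 1/v" using a \<open>v>0\<close> by (simp add: field_simps)
  moreover have "1/v \<le> 3" using a \<open>v>0\<close> by (simp add: field_simps)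
  ultimately have "\<lceil>1/v\<rceil> = 3" by (intro ceiling_unique) auto
  then show ?thesis unfolding item_class_def by simp
qed

lemma item_class_4: "1/4 \<le> v \<Longrightarrow> v < 1/3 \<Longrightarrow> item_class v = 4"
proof -
  assume a: "1/4 \<le> v" "v < 1/3"
  have "v > 0" using a by simp
  have "3 < 1/v" using a \<open>v>0\<close> by (simp add: field_simps)
  moreover have "1/v \<le> 4" using a \<open>v>0\<close> by (simp add: field_simps)
  ultimately have "\<lceil>1/v\<rceil> = 4" by (intro ceiling_unique) auto
  then show ?thesis unfolding item_class_def by simp
qed



lemma filter_len_mono: "(\<And>x. P x \<Longrightarrow> Q x) \<Longrightarrow> length (filter P xs) \<le> length (filter Q xs)"
  by (induction xs) auto

lemma len_filter_perm: "mset xs = mset ys \<Longrightarrow> length (filter P xs) = length (filter P ys)"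
  by (metis mset_filter size_mset)

lemma rs_props:
  fixes xs :: "rat list"
  defines "ys \<equiv> rev (sort xs)"
  shows "length ys = length xs" "mset ys = mset xs"
    "\<And>i j. i \<le> j \<Longrightarrow> j < length xs \<Longrightarrow> ys!j \<le> ys!i"
proof -
  show "length ys = length xs" unfolding ys_def by simp
  show "mset ys = mset xs" unfolding ys_def by simp
  fix i j assume ij: "i \<le> j" "j < length xs"
  have s: "sorted (sort xs)" by simp
  have "ys!j = sort xs ! (length xs - Suc j)" unfolding ys_def using ij by (simp add: rev_nth)
  moreover have "ys!i = sort xs ! (length xs - Suc i)" unfolding ys_def using ij by (simp add: rev_nth)
  moreover have "sort xs ! (length xs - Suc j) \<le> sort xs ! (length xs - Suc i)"
    using ij by (intro sorted_nth_mono[OF s]) auto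
  ultimately show "ys!j \<le> ys!i" by simp
qed

lemma xm_ge_count:
  fixes xs :: "rat list"
  assumes "1 \<le> m" "m \<le> length xs"
  shows "m \<le> length (filter (\<lambda>v. xm_of xs m \<le> v) xs)"
proof -
  define ys where "ys = rev (sort xs)"
  note p = rs_props[where xs=xs, folded ys_def]
  have x: "xm_of xs m = ys!(m-1)" unfolding xm_of_def ys_def using assms by simp
  have "\<forall>v\<in>set (take m ys). ys!(m-1) \<le> v"
  proof
    fix v assume "v \<in> set (take m ys)"
    then obtain i where i: "i < length (take m ys)" "take m ys ! i = v" by (auto simp: in_set_conv_nth)
    then have "i < m" "i < length ys" by auto
    then show "ys!(m-1) \<le> v" using i p(3)[of i "m-1"] assms p(1) by auto
  qed
  then have "filter (\<lambda>v. ys!(m-1) \<le> v) (take m ys) = take m ys" by simp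
  then have "m = length (filter (\<lambda>v. ys!(m-1) \<le> v) (take m ys))" using assms p(1) by simp
  also have "\<dots> \<le> length (filter (\<lambda>v. ys!(m-1) \<le> v) ys)"
  proof -
    have "ys = take m ys @ drop m ys" by simp
    then have "filter (\<lambda>v. ys!(m-1) \<le> v) ys = filter (\<lambda>v. ys!(m-1) \<le> v) (take m ys) @ filter (\<lambda>v. ys!(m-1) \<le> v) (drop m ys)"
      by (metis filter_append)
    then show ?thesis by simp
  qed
  also have "\<dots> = length (filter (\<lambda>v. ys!(m-1) \<le> v) xs)" using len_filter_perm[OF p(2)] by simp
  finally show ?thesis using x by simp
qed

lemma xm_gt_count:
  fixes xs :: "rat list"
  assumes "1 \<le> m" "m \<le> length xs"
  shows "length (filter (\<lambda>v. xm_of xs m < v) xs) < m"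
proof -
  define ys where "ys = rev (sort xs)"
  note p = rs_props[where xs=xs, folded ys_def]
  have x: "xm_of xs m = ys!(m-1)" unfolding xm_of_def ys_def using assms by simp
  have "\<forall>v\<in>set (drop (m-1) ys). v \<le> ys!(m-1)"
  proof
    fix v assume "v \<in> set (drop (m-1) ys)"
    then obtain i where i: "i < length (drop (m-1) ys)" "drop (m-1) ys ! i = v" by (auto simp: in_set_conv_nth)
    then show "v \<le> ys!(m-1)" using p(3)[of "m-1" "m-1+i"] p(1) by auto
  qed
  then have e: "filter (\<lambda>v. ys!(m-1) < v) (drop (m-1) ys) = []" by (auto simp: filter_empty_conv)
  have "length (filter (\<lambda>v. ys!(m-1) < v) ys) = length (filter (\<lambda>v. ys!(m-1) < v) (take (m-1) ys))"
  proof -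
    have "ys = take (m-1) ys @ drop (m-1) ys" by simp
    then have "filter (\<lambda>v. ys!(m-1) < v) ys = filter (\<lambda>v. ys!(m-1) < v) (take (m-1) ys) @ filter (\<lambda>v. ys!(m-1) < v) (drop (m-1) ys)"
      by (metis filter_append)
    then show ?thesis using e by simp
  qed
  also have "\<dots> \<le> length (take (m-1) ys)" by (rule length_filter_le)
  also have "\<dots> \<le> m - 1" by simp
  finally have "length (filter (\<lambda>v. ys!(m-1) < v) xs) \<le> m - 1" using len_filter_perm[OF p(2)] by simp
  then show ?thesis using x assms by simp
qed

lemma xm_in_set: "1 \<le> m \<Longrightarrow> m \<le> length xs \<Longrightarrow> xm_of xs m \<in> set xs"
proof -
  assume a: "1 \<le> m" "m \<le> length xs"
  have "rev (sort xs) ! (m-1) \<in> set (rev (sort xs))" using a by (intro nth_mem) simp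
  then show ?thesis unfolding xm_of_def using a by simp
qed

lemma xm_lower:
  fixes xs :: "rat list"
  assumes "1 \<le> m" "m \<le> length (filter (\<lambda>v. c \<le> v) xs)"
  shows "c \<le> xm_of xs m"
proof (rule ccontr)
  assume "\<not> c \<le> xm_of xs m"
  then have "length (filter (\<lambda>v. c \<le> v) xs) \<le> length (filter (\<lambda>v. xm_of xs m < v) xs)"
    by (intro filter_len_mono) auto
  moreover have "m \<le> length xs" using assms(2) by (meson le_trans length_filter_le)
  ultimately show False using xm_gt_count[OF assms(1)] assms(2) by fastforce
qed

lemma xm_lower_strict:
  fixes xs :: "rat list"
  assumes "1 \<le> m" "m \<le> length (filter (\<lambda>v. c < v) xs)"
  shows "c < xm_of xs m"
proof (rule ccontr)
  assume "\<not> c < xm_of xs m"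
  then have "length (filter (\<lambda>v. c < v) xs) \<le> length (filter (\<lambda>v. xm_of xs m < v) xs)"
    by (intro filter_len_mono) auto
  moreover have "m \<le> length xs" using assms(2) by (meson le_trans length_filter_le)
  ultimately show False using xm_gt_count[OF assms(1)] assms(2) by fastforce
qed



definition sml :: "rat list \<Rightarrow> nat \<Rightarrow> nat set" where "sml xs p = {i. i < p \<and> xs!i < 1/4}"
definition Ssum :: "rat list \<Rightarrow> nat \<Rightarrow> rat" where "Ssum xs p = (\<Sum>i\<in>sml xs p. xs!i)"
definition cntP :: "(rat \<Rightarrow> bool) \<Rightarrow> rat list \<Rightarrow> nat \<Rightarrow> nat" where "cntP P xs p = card {i. i < p \<and> P (xs!i)}"

definition dnfI :: "nat \<Rightarrow> rat \<times> nat \<Rightarrow> rat \<Rightarrow> bool" where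
 "dnfI t s N \<longleftrightarrow> 0 \<le> fst s \<and> fst s < 1 \<and> (\<exists>r::nat. of_nat r \<le> of_nat t * fst s \<and> N \<le> of_nat t * of_nat (snd s) + of_nat r)"

definition sumL :: "('a \<Rightarrow> rat) \<Rightarrow> 'a list \<Rightarrow> rat" where "sumL h l = sum_list (map h l)"

definition nSome :: "(rat option \<times> rat) list \<Rightarrow> rat" where "nSome cr = sumL (\<lambda>b. if fst b = None then 0 else 1) cr"
definition nFull :: "rat \<Rightarrow> (rat option \<times> rat) list \<Rightarrow> rat" where "nFull x cr = sumL (\<lambda>b. if 1 \<le> vload x b then 1 else 0) cr"
definition nfSnd :: "rat \<Rightarrow> (rat option \<times> rat) list \<Rightarrow> rat" where "nfSnd x cr = sumL (\<lambda>b. if vload x b < 1 then snd b else 0) cr"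
definition sSnd :: "(rat option \<times> rat) list \<Rightarrow> rat" where "sSnd cr = sumL snd cr"

lemma sumL_upd: "k < length l \<Longrightarrow> sumL h (l[k := b]) = sumL h l - h (l!k) + h b"
proof (induction l arbitrary: k)
  case Nil then show ?case by simp
next
  case (Cons a l) then show ?case by (cases k) (auto simp: sumL_def)
qed

lemma sumL_nonneg: "(\<And>b. b \<in> set l \<Longrightarrow> 0 \<le> h b) \<Longrightarrow> 0 \<le> sumL h l"
  unfolding sumL_def by (induction l) auto

lemma sumL_le: "(\<And>b. b \<in> set l \<Longrightarrow> h b \<le> g b) \<Longrightarrow> sumL h l \<le> sumL g l"
  unfolding sumL_def by (induction l) (auto intro: add_mono)

lemma sumL_const: "sumL (\<lambda>b. c) l = of_nat (length l) * c"
  unfolding sumL_def by (induction l) (auto simp: algebra_simps)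

lemma sumL_ind_all: "(\<forall>b\<in>set l. \<not> P b) \<Longrightarrow> sumL (\<lambda>b. if P b then 0 else 1) l = of_nat (length l)"
  unfolding sumL_def by (induction l) auto

lemma sumL_ind_le: "sumL (\<lambda>b. if P b then 0 else 1) l \<le> of_nat (length l)"
  unfolding sumL_def by (induction l) auto

lemma sumL_ind_lt: "(\<exists>b\<in>set l. P b) \<Longrightarrow> sumL (\<lambda>b. if P b then 0 else 1) l < of_nat (length l)"
  unfolding sumL_def
proof (induction l)
  case Nil then show ?case by simp
next
  case (Cons a l)
  have "sum_list (map (\<lambda>b. if P b then 0 else (1::rat)) l) \<le> of_nat (length l)"
    using sumL_ind_le[of P l] unfolding sumL_def by simp
  then show ?case using Cons by auto
qed

lemma sumL_count: "sumL (\<lambda>b. if P b then 1 else 0) l = of_nat (length (filter P l))"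
  unfolding sumL_def by (induction l) auto

lemma dnf_step:
  assumes "dnfI t s N" "1 / of_nat t \<le> v" "0 < v" "t \<ge> 1"
  shows "dnfI t (dnf_add v s) (N + 1)"
proof -
  obtain l c where s: "s = (l, c)" by (cases s)
  from assms(1) obtain r :: nat where r: "0 \<le> l" "l < 1" "of_nat r \<le> of_nat t * l" "N \<le> of_nat t * of_nat c + of_nat r"
    unfolding dnfI_def s by auto
  have tpos: "(0::rat) < of_nat t" using assms(4) by simp
  have tv: "1 \<le> of_nat t * v" using assms(2) tpos by (simp add: field_simps)
  show ?thesis
  proof (cases "1 \<le> l + v")
    case True
    have "of_nat t * l < of_nat t * 1" using r(2) tpos by (rule mult_strict_left_mono)
    then have "of_nat r < (of_nat t :: rat)" using r(3) by simp
    then have "r < t" by simp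
    then have "of_nat r + 1 \<le> (of_nat t :: rat)" by (metis Suc_leI of_nat_Suc of_nat_le_iff add.commute)
    then have "N + 1 \<le> of_nat t * of_nat (Suc c) + of_nat (0::nat)" using r(4) by (simp add: algebra_simps)
    then show ?thesis using True unfolding dnfI_def dnf_add_def s by (intro conjI exI[of _ 0]) auto
  next
    case False
    have "of_nat (Suc r) \<le> of_nat t * (l + v)" using r(3) tv by (simp add: algebra_simps)
    moreover have "N + 1 \<le> of_nat t * of_nat c + of_nat (Suc r)" using r(4) by simp
    ultimately show ?thesis using False r(1) assms(3) unfolding dnfI_def dnf_add_def s
      by (intro conjI exI[of _ "Suc r"]) auto
  qed
qed

lemma dnf_final:
  assumes "dnfI t s N" "t \<ge> 1"
  shows "N \<le> of_nat t * of_nat (snd s) + (of_nat t - 1)"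
proof -
  from assms(1) obtain r :: nat where r: "fst s < 1" "of_nat r \<le> of_nat t * fst s" "N \<le> of_nat t * of_nat (snd s) + of_nat r"
    unfolding dnfI_def by auto
  have tpos: "(0::rat) < of_nat t" using assms(2) by simp
  have "of_nat t * fst s < of_nat t * 1" using r(1) tpos by (rule mult_strict_left_mono)
  then have "of_nat r < (of_nat t :: rat)" using r(2) by simp
  then have "r < t" by simp
  then have "r \<le> t - 1" by simp
  then have "(of_nat r::rat) \<le> of_nat t - 1" using assms(2) by (metis of_nat_1 of_nat_diff of_nat_le_iff)
  then show ?thesis using r(3) by simp
qed

lemma sb_step:
  assumes "0 \<le> fst s" "fst s < 1" "A \<le> 5/4 * of_nat (snd s) + fst s" "0 < v" "v < 1/4"
  shows "0 \<le> fst (dnf_add v s) \<and> fst (dnf_add v s) < 1 \<and> A + v \<le> 5/4 * of_nat (snd (dnf_add v s)) + fst (dnf_add v s)"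
  using assms unfolding dnf_add_def by (auto simp: algebra_simps)



definition bigok :: "rat \<Rightarrow> rat option \<times> rat \<Rightarrow> bool" where
 "bigok x b \<longleftrightarrow> (\<forall>a. fst b = Some a \<longrightarrow> x \<le> a) \<and> 0 \<le> snd b \<and> snd b < 5/4 - x"
definition prefI :: "rat \<Rightarrow> (rat option \<times> rat) list \<Rightarrow> bool" where
 "prefI x cr \<longleftrightarrow> (\<forall>k<length cr. 0 < snd (cr!k) \<longrightarrow> (\<forall>l<k. 1 \<le> vload x (cr!l)))"
definition clI :: "rat list \<Rightarrow> rat \<Rightarrow> nat \<Rightarrow> (rat option \<times> rat) list \<Rightarrow> bool" where
 "clI xs x p cr \<longleftrightarrow> (\<exists>CL. CL \<subseteq> sml xs p \<and> of_nat (card CL) \<le> nFull x cr \<and>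
      ((\<exists>b\<in>set cr. vload x b < 1) \<longrightarrow> (\<Sum>i\<in>sml xs p - CL. xs!i) \<le> nFull x cr * (1 - x) + nfSnd x cr))"
definition c2 :: "rat \<Rightarrow> bool" where "c2 v \<longleftrightarrow> 1/2 \<le> v"
definition c3 :: "rat \<Rightarrow> bool" where "c3 v \<longleftrightarrow> 1/3 \<le> v \<and> v < 1/2"
definition c4 :: "rat \<Rightarrow> bool" where "c4 v \<longleftrightarrow> 1/4 \<le> v \<and> v < 1/3"
definition gex :: "rat \<Rightarrow> rat \<Rightarrow> bool" where "gex x v \<longleftrightarrow> x \<le> v"

definition inv :: "rat list \<Rightarrow> rat \<Rightarrow> nat \<Rightarrow> nat \<Rightarrow> dh_state \<Rightarrow> bool" where
 "inv xs x m p st \<longleftrightarrow> (case st of (cr, tb, sb) \<Rightarrow>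
  length cr = m \<and>
  nSome cr = of_nat (min m (cntP (gex x) xs p)) \<and>
  (\<forall>b\<in>set cr. bigok x b) \<and> prefI x cr \<and>
  dnfI 2 (tb 2) (of_nat (cntP c2 xs p) - nSome cr) \<and>
  dnfI 3 (tb 3) (of_nat (cntP c3 xs p)) \<and>
  dnfI 4 (tb 4) (of_nat (cntP c4 xs p)) \<and>
  0 \<le> fst sb \<and> fst sb < 1 \<and> Ssum xs p - sSnd cr \<le> 5/4 * of_nat (snd sb) + fst sb \<and> sSnd cr \<le> Ssum xs p \<and>
  clI xs x p cr)"

lemma cntP_Suc: "cntP P xs (Suc p) = cntP P xs p + (if P (xs!p) then 1 else 0)"
proof -
  have e: "{i. i < Suc p \<and> P (xs!i)} = (if P (xs!p) then insert p {i. i < p \<and> P (xs!i)} else {i. i < p \<and> P (xs!i)})"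
    by (auto simp: less_Suc_eq)
  show ?thesis unfolding cntP_def e by auto
qed

lemma cntP_0: "cntP P xs 0 = 0" unfolding cntP_def by simp

lemma sml_Suc: "sml xs (Suc p) = (if xs!p < 1/4 then insert p (sml xs p) else sml xs p)"
  unfolding sml_def by (auto simp: less_Suc_eq)

lemma sml_fin[simp]: "finite (sml xs p)" unfolding sml_def by simp
lemma p_notin_sml[simp]: "p \<notin> sml xs p" unfolding sml_def by simp

lemma Ssum_Suc: "Ssum xs (Suc p) = Ssum xs p + (if xs!p < 1/4 then xs!p else 0)"
  unfolding Ssum_def sml_Suc by auto

lemma vload_ge: "bigok x b \<Longrightarrow> snd b + x \<le> vload x b"
  unfolding bigok_def vload_def by (cases "fst b") auto

lemma nf_snd: "bigok x b \<Longrightarrow> vload x b < 1 \<Longrightarrow> snd b < 1 - x"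
  using vload_ge[of x b] by simp

lemma prefI_upd:
  assumes "prefI x cr" "k < length cr" "vload x (cr!k) \<le> vload x b'"
    "0 < snd b' \<Longrightarrow> snd b' = snd (cr!k) \<or> (\<forall>l<k. 1 \<le> vload x (cr!l))"
  shows "prefI x (cr[k := b'])"
  unfolding prefI_def
proof (intro allI impI)
  fix k2 l assume k2: "k2 < length (cr[k := b'])" "0 < snd (cr[k := b'] ! k2)" "l < k2"
  have mono: "\<And>j. j < length cr \<Longrightarrow> vload x (cr!j) \<le> vload x (cr[k := b']!j)"
  proof -
    fix j assume "j < length cr"
    show "vload x (cr!j) \<le> vload x (cr[k := b']!j)"
      using assms(3) \<open>j < length cr\<close> by (cases "j = k") auto
  qed
  have "1 \<le> vload x (cr!l)"
  proof (cases "k2 = k")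
    case True
    then have "0 < snd b'" using k2 assms(2) by simp
    from assms(4)[OF this] show ?thesis
    proof
      assume "snd b' = snd (cr!k)"
      then have "0 < snd (cr!k)" using \<open>0 < snd b'\<close> by simp
      then show ?thesis using assms(1) k2 True unfolding prefI_def by auto
    next
      assume "\<forall>l<k. 1 \<le> vload x (cr!l)" then show ?thesis using k2 True by auto
    qed
  next
    case False
    then have "0 < snd (cr!k2)" using k2 by simp
    then show ?thesis using assms(1) k2 unfolding prefI_def by auto
  qed
  also have "\<dots> \<le> vload x (cr[k := b']!l)" using mono k2 by simp
  finally show "1 \<le> vload x (cr[k := b']!l)" .
qed

lemma nonfull_back:
  assumes "\<exists>b\<in>set (cr[k := b']). vload x b < 1" "vload x (cr!k) \<le> vload x b'" "k < length cr"
  shows "\<exists>b\<in>set cr. vload x b < 1"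
proof -
  from assms(1) obtain c where c: "c \<in> set (cr[k := b'])" "vload x c < 1" by blast
  then have "c \<in> insert b' (set cr)" using set_update_subset_insert by fast
  then show ?thesis
  proof
    assume "c = b'"
    then have "vload x (cr!k) < 1" using c assms(2) by simp
    then show ?thesis using assms(3) by (metis nth_mem)
  next
    assume "c \<in> set cr" then show ?thesis using c by blast
  qed
qed



lemma inv_simp: "inv xs x m p (cr, tb, sb) \<longleftrightarrow>
  length cr = m \<and>
  nSome cr = of_nat (min m (cntP (gex x) xs p)) \<and>
  (\<forall>b\<in>set cr. bigok x b) \<and> prefI x cr \<and>
  dnfI 2 (tb 2) (of_nat (cntP c2 xs p) - nSome cr) \<and>
  dnfI 3 (tb 3) (of_nat (cntP c3 xs p)) \<and>
  dnfI 4 (tb 4) (of_nat (cntP c4 xs p)) \<and>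
  0 \<le> fst sb \<and> fst sb < 1 \<and> Ssum xs p - sSnd cr \<le> 5/4 * of_nat (snd sb) + fst sb \<and> sSnd cr \<le> Ssum xs p \<and>
  clI xs x p cr"
  unfolding inv_def by simp

lemma step_big:
  assumes inv: "inv xs x m p (cr, tb, sb)" and v: "v = xs!p" and hx: "1/2 \<le> x"
    and c: "x \<le> v" "\<exists>b\<in>set cr. fst b = None" and vv: "v < 1"
  shows "inv xs x m (Suc p) (upd_first (\<lambda>b. fst b = None) (\<lambda>b. (Some v, snd b)) cr, tb, sb)"
proof -
  note I = inv[unfolded inv_simp]
  obtain k where k: "k < length cr" "fst (cr!k) = None" "upd_first (\<lambda>b. fst b = None) (\<lambda>b. (Some v, snd b)) cr = cr[k := (Some v, snd (cr!k))]"
    using upd_first_conv[OF c(2)] by blast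
  define b where "b = cr!k"
  define b' where "b' = (Some v, snd b)"
  have upd: "upd_first (\<lambda>b. fst b = None) (\<lambda>b. (Some v, snd b)) cr = cr[k := b']" using k unfolding b_def b'_def by simp
  have bin: "b \<in> set cr" unfolding b_def using k by simp
  have bok: "bigok x b" using I bin by blast
  have vlb: "vload x b = snd b + x" using k unfolding b_def vload_def by simp
  have vlb': "vload x b' = snd b + v" unfolding b'_def vload_def by simp
  have mono: "vload x b \<le> vload x b'" using vlb vlb' c by simp
  have v2: "1/2 \<le> v" using hx c by simp
  have G: "cntP (gex x) xs (Suc p) = cntP (gex x) xs p + 1" using cntP_Suc c v by (simp add: gex_def)
  have N2: "cntP c2 xs (Suc p) = cntP c2 xs p + 1" using cntP_Suc v2 v by (simp add: c2_def)
  have N3: "cntP c3 xs (Suc p) = cntP c3 xs p" using cntP_Suc[of _ xs p] v2 v by (simp add: c3_def c4_def)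
  have N4: "cntP c4 xs (Suc p) = cntP c4 xs p" using cntP_Suc[of _ xs p] v2 v by (simp add: c3_def c4_def)
  have S: "Ssum xs (Suc p) = Ssum xs p" using Ssum_Suc[of xs p] v2 v by simp
  have sml: "sml xs (Suc p) = sml xs p" using sml_Suc[of xs p] v2 v by simp
  have nS: "nSome (cr[k := b']) = nSome cr + 1"
    unfolding nSome_def using sumL_upd[OF k(1)] k(2) unfolding b'_def by simp
  have nSlt: "nSome cr < of_nat m" unfolding nSome_def using sumL_ind_lt[OF c(2)] I by simp
  have minG: "(of_nat (min m (cntP (gex x) xs (Suc p))) :: rat) = of_nat (min m (cntP (gex x) xs p)) + 1"
  proof -
    have "min m (cntP (gex x) xs p) < m" using nSlt I by simp
    then have "cntP (gex x) xs p < m" by simp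
    then show ?thesis unfolding G by simp
  qed
  have sS: "sSnd (cr[k := b']) = sSnd cr" unfolding sSnd_def using sumL_upd[OF k(1)] unfolding b'_def b_def by simp
  have nF: "nFull x (cr[k := b']) = nFull x cr - (if 1 \<le> vload x b then 1 else 0) + (if 1 \<le> vload x b' then 1 else 0)"
    unfolding nFull_def using sumL_upd[OF k(1)] unfolding b_def by simp
  have nfS: "nfSnd x (cr[k := b']) = nfSnd x cr - (if vload x b < 1 then snd b else 0) + (if vload x b' < 1 then snd b' else 0)"
    unfolding nfSnd_def using sumL_upd[OF k(1)] unfolding b_def by simp
  have bigok': "\<forall>c\<in>set (cr[k := b']). bigok x c"
  proof
    fix c assume "c \<in> set (cr[k := b'])"
    then have "c \<in> insert b' (set cr)" using set_update_subset_insert by fast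
    moreover have "bigok x b'" using bok c unfolding bigok_def b'_def by simp
    ultimately show "bigok x c" using I by blast
  qed
  have pref': "prefI x (cr[k := b'])"
    by (rule prefI_upd) (use I k mono in \<open>auto simp: b_def b'_def\<close>)
  from I obtain CL where CL: "CL \<subseteq> sml xs p" "of_nat (card CL) \<le> nFull x cr"
    "(\<exists>b\<in>set cr. vload x b < 1) \<longrightarrow> (\<Sum>i\<in>sml xs p - CL. xs!i) \<le> nFull x cr * (1 - x) + nfSnd x cr"
    unfolding clI_def by blast
  have nFle: "nFull x cr \<le> nFull x (cr[k := b'])" using nF mono by auto
  have cl': "clI xs x (Suc p) (cr[k := b'])"
    unfolding clI_def sml
  proof (intro exI[of _ CL] conjI impI)
    show "CL \<subseteq> sml xs p" by fact
    show "of_nat (card CL) \<le> nFull x (cr[k := b'])" using CL(2) nFle by simp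
    assume ne: "\<exists>c\<in>set (cr[k := b']). vload x c < 1"
    have "\<exists>c\<in>set cr. vload x c < 1" by (rule nonfull_back[OF ne]) (use mono k in \<open>auto simp: b_def\<close>)
    then have old: "(\<Sum>i\<in>sml xs p - CL. xs!i) \<le> nFull x cr * (1 - x) + nfSnd x cr" using CL(3) by blast
    have "nFull x cr * (1 - x) + nfSnd x cr \<le> nFull x (cr[k := b']) * (1 - x) + nfSnd x (cr[k := b'])"
    proof (cases "1 \<le> vload x b")
      case True
      then have "1 \<le> vload x b'" using mono by simp
      then show ?thesis using True nF nfS by simp
    next
      case False
      have sb: "snd b < 1 - x" using nf_snd[OF bok] False by simp
      show ?thesis
      proof (cases "1 \<le> vload x b'")
        case True
        then show ?thesis using False nF nfS sb by (simp add: algebra_simps)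
      next
        case False2: False
        then show ?thesis using False nF nfS by (simp add: b'_def)
      qed
    qed
    then show "(\<Sum>i\<in>sml xs p - CL. xs!i) \<le> nFull x (cr[k := b']) * (1 - x) + nfSnd x (cr[k := b'])" using old by simp
  qed
  have d2: "dnfI 2 (tb 2) (of_nat (cntP c2 xs (Suc p)) - nSome (cr[k := b']))"
  proof -
    have "(of_nat (cntP c2 xs (Suc p)) :: rat) - nSome (cr[k := b']) = of_nat (cntP c2 xs p) - nSome cr"
      using N2 nS by simp
    then show ?thesis using I by auto
  qed
  have ns': "nSome (cr[k := b']) = of_nat (min m (cntP (gex x) xs (Suc p)))" using nS minG I by auto
  have len': "length (cr[k := b']) = m" using I by simp
  show ?thesis unfolding upd inv_simp
    using I bigok' pref' cl' ns' d2 len' sS N3 N4 S by auto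
qed



lemma step_smallcrit:
  assumes inv: "inv xs x m p (cr, tb, sb)" and v: "v = xs!p" and hx: "1/2 \<le> x"
    and c: "0 < v" "v < 1/4" "\<exists>b\<in>set cr. vload x b < 1"
  shows "inv xs x m (Suc p) (upd_first (\<lambda>b. vload x b < 1) (\<lambda>b. (fst b, snd b + v)) cr, tb, sb)"
proof -
  note I = inv[unfolded inv_simp]
  obtain k where k: "k < length cr" "vload x (cr!k) < 1" "\<forall>l<k. \<not> vload x (cr!l) < 1"
     "upd_first (\<lambda>b. vload x b < 1) (\<lambda>b. (fst b, snd b + v)) cr = cr[k := (fst (cr!k), snd (cr!k) + v)]"
    using upd_first_conv[OF c(3)] by blast
  define b where "b = cr!k"
  define b' where "b' = (fst b, snd b + v)"
  have upd: "upd_first (\<lambda>b. vload x b < 1) (\<lambda>b. (fst b, snd b + v)) cr = cr[k := b']" using k unfolding b_def b'_def by simp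
  have bin: "b \<in> set cr" unfolding b_def using k by simp
  have bok: "bigok x b" using I bin by blast
  have bnonf: "vload x b < 1" using k b_def by simp
  have sb: "snd b < 1 - x" using nf_snd[OF bok bnonf] .
  have vlb': "vload x b' = vload x b + v" unfolding b'_def vload_def by simp
  have mono: "vload x b \<le> vload x b'" using vlb' c by simp
  have G: "cntP (gex x) xs (Suc p) = cntP (gex x) xs p" using cntP_Suc[of _ xs p] c v hx by (simp add: gex_def)
  have N2: "cntP c2 xs (Suc p) = cntP c2 xs p" using cntP_Suc[of _ xs p] c v by (simp add: c2_def)
  have N3: "cntP c3 xs (Suc p) = cntP c3 xs p" using cntP_Suc[of _ xs p] c v by (simp add: c3_def)
  have N4: "cntP c4 xs (Suc p) = cntP c4 xs p" using cntP_Suc[of _ xs p] c v by (simp add: c4_def)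
  have S: "Ssum xs (Suc p) = Ssum xs p + v" using Ssum_Suc[of xs p] c v by simp
  have sml: "sml xs (Suc p) = insert p (sml xs p)" using sml_Suc[of xs p] c v by simp
  have nS: "nSome (cr[k := b']) = nSome cr"
    unfolding nSome_def using sumL_upd[OF k(1)] unfolding b'_def b_def by simp
  have sS: "sSnd (cr[k := b']) = sSnd cr + v" unfolding sSnd_def using sumL_upd[OF k(1)] unfolding b'_def b_def by simp
  have nF: "nFull x (cr[k := b']) = nFull x cr + (if 1 \<le> vload x b' then 1 else 0)"
    unfolding nFull_def using sumL_upd[OF k(1)] bnonf unfolding b_def by simp
  have nfS: "nfSnd x (cr[k := b']) = nfSnd x cr - snd b + (if vload x b' < 1 then snd b' else 0)"
    unfolding nfSnd_def using sumL_upd[OF k(1)] bnonf unfolding b_def by simp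
  have bigok': "\<forall>c\<in>set (cr[k := b']). bigok x c"
  proof
    fix c assume "c \<in> set (cr[k := b'])"
    then have "c \<in> insert b' (set cr)" using set_update_subset_insert by fast
    moreover have "bigok x b'" using bok c sb unfolding bigok_def b'_def by auto
    ultimately show "bigok x c" using I by blast
  qed
  have pref': "prefI x (cr[k := b'])"
    by (rule prefI_upd) (use I k mono in \<open>auto simp: b_def b'_def not_less\<close>)
  from I obtain CL where CL: "CL \<subseteq> sml xs p" "of_nat (card CL) \<le> nFull x cr"
    "(\<exists>b\<in>set cr. vload x b < 1) \<longrightarrow> (\<Sum>i\<in>sml xs p - CL. xs!i) \<le> nFull x cr * (1 - x) + nfSnd x cr"
    unfolding clI_def by blast
  have old: "(\<Sum>i\<in>sml xs p - CL. xs!i) \<le> nFull x cr * (1 - x) + nfSnd x cr" using CL(3) c(3) by blast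
  have pCL: "p \<notin> CL" using CL(1) by auto
  have finCL: "finite CL" using CL(1) sml_fin finite_subset by blast
  have cl': "clI xs x (Suc p) (cr[k := b'])"
  proof (cases "1 \<le> vload x b'")
    case True
    show ?thesis unfolding clI_def sml
    proof (intro exI[of _ "insert p CL"] conjI impI)
      show "insert p CL \<subseteq> insert p (sml xs p)" using CL(1) by auto
      show "of_nat (card (insert p CL)) \<le> nFull x (cr[k := b'])" using CL(2) nF True pCL finCL by simp
      have e: "insert p (sml xs p) - insert p CL = sml xs p - CL" by auto
      show "(\<Sum>i\<in>insert p (sml xs p) - insert p CL. xs!i) \<le> nFull x (cr[k := b']) * (1 - x) + nfSnd x (cr[k := b'])"
        unfolding e using old nF nfS True sb by (simp add: algebra_simps)
    qed
  next
    case False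
    show ?thesis unfolding clI_def sml
    proof (intro exI[of _ CL] conjI impI)
      show "CL \<subseteq> insert p (sml xs p)" using CL(1) by auto
      show "of_nat (card CL) \<le> nFull x (cr[k := b'])" using CL(2) nF False by simp
      have e: "insert p (sml xs p) - CL = insert p (sml xs p - CL)" using pCL by auto
      have "(\<Sum>i\<in>insert p (sml xs p) - CL. xs!i) = v + (\<Sum>i\<in>sml xs p - CL. xs!i)"
        unfolding e using v by (subst sum.insert) auto
      then show "(\<Sum>i\<in>insert p (sml xs p) - CL. xs!i) \<le> nFull x (cr[k := b']) * (1 - x) + nfSnd x (cr[k := b'])"
        using old nF nfS False by (simp add: b'_def algebra_simps)
    qed
  qed
  have d2: "dnfI 2 (tb 2) (of_nat (cntP c2 xs (Suc p)) - nSome (cr[k := b']))" using I N2 nS by auto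
  have ns': "nSome (cr[k := b']) = of_nat (min m (cntP (gex x) xs (Suc p)))" using nS G I by auto
  have len': "length (cr[k := b']) = m" using I by simp
  have sb': "Ssum xs (Suc p) - sSnd (cr[k := b']) \<le> 5/4 * of_nat (snd sb) + fst sb \<and> sSnd (cr[k := b']) \<le> Ssum xs (Suc p)"
    using I S sS by auto
  show ?thesis unfolding upd inv_simp
    using I bigok' pref' cl' ns' d2 len' sb' N3 N4 by auto
qed

lemma step_sb:
  assumes inv: "inv xs x m p (cr, tb, sb)" and v: "v = xs!p" and hx: "1/2 \<le> x"
    and c: "0 < v" "v < 1/4" "\<not> (\<exists>b\<in>set cr. vload x b < 1)"
  shows "inv xs x m (Suc p) (cr, tb, dnf_add v sb)"
proof -
  note I = inv[unfolded inv_simp]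
  have G: "cntP (gex x) xs (Suc p) = cntP (gex x) xs p" using cntP_Suc[of _ xs p] c v hx by (simp add: gex_def)
  have N2: "cntP c2 xs (Suc p) = cntP c2 xs p" using cntP_Suc[of _ xs p] c v by (simp add: c2_def)
  have N3: "cntP c3 xs (Suc p) = cntP c3 xs p" using cntP_Suc[of _ xs p] c v by (simp add: c3_def)
  have N4: "cntP c4 xs (Suc p) = cntP c4 xs p" using cntP_Suc[of _ xs p] c v by (simp add: c4_def)
  have S: "Ssum xs (Suc p) = Ssum xs p + v" using Ssum_Suc[of xs p] c v by simp
  have sml: "sml xs (Suc p) = insert p (sml xs p)" using sml_Suc[of xs p] c v by simp
  have sbs: "0 \<le> fst (dnf_add v sb) \<and> fst (dnf_add v sb) < 1 \<and> (Ssum xs p - sSnd cr) + v \<le> 5/4 * of_nat (snd (dnf_add v sb)) + fst (dnf_add v sb)"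
    by (rule sb_step) (use I c in auto)
  from I obtain CL where CL: "CL \<subseteq> sml xs p" "of_nat (card CL) \<le> nFull x cr"
    unfolding clI_def by blast
  have cl': "clI xs x (Suc p) cr" unfolding clI_def sml
    by (intro exI[of _ CL] conjI impI) (use CL c in auto)
  show ?thesis unfolding inv_simp using I G N2 N3 N4 S cl' sbs c by (auto simp: algebra_simps)
qed



lemma step_class:
  assumes inv: "inv xs x m p (cr, tb, sb)" and v: "v = xs!p" and hx: "1/2 \<le> x"
    and c: "1/4 \<le> v" "v < 1" "\<not> (x \<le> v \<and> (\<exists>b\<in>set cr. fst b = None))"
  shows "inv xs x m (Suc p) (cr, tb(item_class v := dnf_add v (tb (item_class v))), sb)"
proof -
  note I = inv[unfolded inv_simp]
  have vpos: "0 < v" using c by simp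
  have S: "Ssum xs (Suc p) = Ssum xs p" using Ssum_Suc[of xs p] c v by simp
  have sml: "sml xs (Suc p) = sml xs p" using sml_Suc[of xs p] c v by simp
  have cl': "clI xs x (Suc p) cr" using I unfolding sml clI_def by simp
  have sb': "Ssum xs (Suc p) - sSnd cr \<le> 5/4 * of_nat (snd sb) + fst sb \<and> sSnd cr \<le> Ssum xs (Suc p)"
    using I S by auto
  show ?thesis
  proof (cases "1/2 \<le> v")
    case True
    have cls: "item_class v = 2" using item_class_2 True c by simp
    have N2: "cntP c2 xs (Suc p) = cntP c2 xs p + 1" using cntP_Suc[of _ xs p] True v by (simp add: c2_def)
    have N3: "cntP c3 xs (Suc p) = cntP c3 xs p" using cntP_Suc[of _ xs p] True v by (simp add: c3_def)
    have N4: "cntP c4 xs (Suc p) = cntP c4 xs p" using cntP_Suc[of _ xs p] True v by (simp add: c4_def)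
    have ns': "nSome cr = of_nat (min m (cntP (gex x) xs (Suc p)))"
    proof (cases "x \<le> v")
      case True
      then have nn: "\<forall>b\<in>set cr. \<not> fst b = None" using c(3) by auto
      have "nSome cr = of_nat m" unfolding nSome_def using sumL_ind_all[OF nn] I by simp
      then have "min m (cntP (gex x) xs p) = m" using I by simp
      then have "min m (cntP (gex x) xs (Suc p)) = m" using cntP_Suc[of "gex x" xs p] by simp
      then show ?thesis using \<open>nSome cr = of_nat m\<close> by simp
    next
      case False
      then have "cntP (gex x) xs (Suc p) = cntP (gex x) xs p" using cntP_Suc[of _ xs p] v by (simp add: gex_def)
      then show ?thesis using I by simp
    qed
    have d2: "dnfI 2 (dnf_add v (tb 2)) (of_nat (cntP c2 xs (Suc p)) - nSome cr)"
    proof -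
      have "dnfI 2 (dnf_add v (tb 2)) ((of_nat (cntP c2 xs p) - nSome cr) + 1)"
        by (rule dnf_step) (use I True vpos in auto)
      then show ?thesis using N2 by (simp add: algebra_simps)
    qed
    show ?thesis unfolding inv_simp cls using I ns' d2 N3 N4 cl' sb' by auto
  next
    case False
    have x: "\<not> x \<le> v" using False hx by simp
    have G: "cntP (gex x) xs (Suc p) = cntP (gex x) xs p" using cntP_Suc[of _ xs p] v x by (simp add: gex_def)
    have N2: "cntP c2 xs (Suc p) = cntP c2 xs p" using cntP_Suc[of _ xs p] False v by (simp add: c2_def)
    show ?thesis
    proof (cases "1/3 \<le> v")
      case True
      have cls: "item_class v = 3" using item_class_3 True False by simp
      have N3: "cntP c3 xs (Suc p) = cntP c3 xs p + 1" using cntP_Suc[of _ xs p] True False v by (simp add: c3_def)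
      have N4: "cntP c4 xs (Suc p) = cntP c4 xs p" using cntP_Suc[of _ xs p] True v by (simp add: c4_def)
      have d3: "dnfI 3 (dnf_add v (tb 3)) (of_nat (cntP c3 xs (Suc p)))"
      proof -
        have "dnfI 3 (dnf_add v (tb 3)) (of_nat (cntP c3 xs p) + 1)"
          by (rule dnf_step) (use I True vpos in auto)
        then show ?thesis using N3 by (simp add: algebra_simps)
      qed
      show ?thesis unfolding inv_simp cls using I G N2 d3 N4 cl' sb' by auto
    next
      case False2: False
      have cls: "item_class v = 4" using item_class_4 False2 c by simp
      have N3: "cntP c3 xs (Suc p) = cntP c3 xs p" using cntP_Suc[of _ xs p] False2 v by (simp add: c3_def)
      have N4: "cntP c4 xs (Suc p) = cntP c4 xs p + 1" using cntP_Suc[of _ xs p] False2 c v by (simp add: c4_def)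
      have d4: "dnfI 4 (dnf_add v (tb 4)) (of_nat (cntP c4 xs (Suc p)))"
      proof -
        have "dnfI 4 (dnf_add v (tb 4)) (of_nat (cntP c4 xs p) + 1)"
          by (rule dnf_step) (use I c vpos in auto)
        then show ?thesis using N4 by (simp add: algebra_simps)
      qed
      show ?thesis unfolding inv_simp cls using I G N2 d4 N3 cl' sb' by auto
    qed
  qed
qed

lemma step_inv:
  assumes inv: "inv xs x m p st" and p: "p < length xs" and items: "\<forall>v\<in>set xs. 0 < v \<and> v < 1" and hx: "1/2 \<le> x"
  shows "inv xs x m (Suc p) (dh_step 4 x (xs!p) st)"
proof -
  obtain cr tb sb where st: "st = (cr, tb, sb)" by (cases st)
  define v where "v = xs!p"
  have "xs!p \<in> set xs" using p by simp
  then have vr: "0 < v" "v < 1" using items unfolding v_def by auto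
  have inv': "inv xs x m p (cr, tb, sb)" using inv st by simp
  have e: "dh_step 4 x v (cr, tb, sb) =
     (if x \<le> v \<and> (\<exists>b\<in>set cr. fst b = None)
       then (upd_first (\<lambda>b. fst b = None) (\<lambda>b. (Some v, snd b)) cr, tb, sb)
     else if 1/4 \<le> v
       then (cr, tb(item_class v := dnf_add v (tb (item_class v))), sb)
     else if (\<exists>b\<in>set cr. vload x b < 1)
       then (upd_first (\<lambda>b. vload x b < 1) (\<lambda>b. (fst b, snd b + v)) cr, tb, sb)
     else (cr, tb, dnf_add v sb))" unfolding dh_step_def by (simp only: prod.case of_nat_numeral)
  show ?thesis
    unfolding st v_def[symmetric] e
    using step_big[OF inv' v_def hx _ _ vr(2)] step_class[OF inv' v_def hx _ vr(2)]
      step_smallcrit[OF inv' v_def hx vr(1)] step_sb[OF inv' v_def hx vr(1)]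
    by auto
qed

lemma inv_init:
  assumes "x \<le> 1"
  shows "inv xs x m 0 (replicate m (None, 0), (\<lambda>_. (0, 0)), (0, 0))"
proof -
  have sml0: "sml xs 0 = {}" unfolding sml_def by simp
  have nS: "nSome (replicate m (None, 0)) = 0" unfolding nSome_def sumL_def by (induction m) auto
  have sS: "sSnd (replicate m (None, 0)) = 0" unfolding sSnd_def sumL_def by (induction m) auto
  have nF: "0 \<le> nFull x (replicate m (None, 0))" unfolding nFull_def by (rule sumL_nonneg) auto
  have nf: "0 \<le> nfSnd x (replicate m (None, 0))" unfolding nfSnd_def by (rule sumL_nonneg) auto
  have "0 \<le> nFull x (replicate m (None, 0)) * (1 - x)" using nF assms by simp
  then have cl: "clI xs x 0 (replicate m (None, 0))" unfolding clI_def sml0 using nF nf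
    by (intro exI[of _ "{}"]) auto
  have bo: "\<forall>b\<in>set (replicate m (None, 0::rat)). bigok x b" using assms unfolding bigok_def by auto
  have pr: "prefI x (replicate m (None, 0))" unfolding prefI_def by simp
  have d: "\<And>t. t \<ge> 1 \<Longrightarrow> dnfI t (0, 0) 0" unfolding dnfI_def by auto
  show ?thesis unfolding inv_simp using nS sS cl bo pr d[of 2] d[of 3] d[of 4]
    by (simp add: cntP_0 Ssum_def sml0)
qed

lemma inv_fold:
  assumes items: "\<forall>v\<in>set xs. 0 < v \<and> v < 1" and hx: "1/2 \<le> x" "x \<le> 1" and p: "p \<le> length xs"
  shows "inv xs x m p (fold (dh_step 4 x) (take p xs) (replicate m (None, 0), (\<lambda>_. (0, 0)), (0, 0)))"
  using p
proof (induction p)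
  case 0 then show ?case using inv_init[OF hx(2)] by simp
next
  case (Suc p)
  then have pl: "p < length xs" by simp
  have "take (Suc p) xs = take p xs @ [xs!p]" using pl by (simp add: take_Suc_conv_app_nth)
  then show ?case using step_inv[OF Suc.IH[OF Suc_leD[OF Suc.prems]] pl items hx(1)] by simp
qed



definition Fc :: "rat list \<Rightarrow> nat \<Rightarrow> nat" where
  "Fc xs m = length (filter (\<lambda>b. 1 \<le> aload b) (fst (fold (dh_step 4 (xm_of xs m)) xs (replicate m (None, 0), (\<lambda>_. (0, 0)), (0, 0)))))"

lemma nfSnd_lt:
  assumes pr: "prefI x cr" and bo: "\<forall>b\<in>set cr. bigok x b" and ne: "\<exists>b\<in>set cr. vload x b < 1"
  shows "nfSnd x cr < 1 - x"
proof -
  define h where "h = (\<lambda>b. if vload x b < 1 then snd b else 0)"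
  define A where "A = {k. k < length cr \<and> vload x (cr!k) < 1}"
  have "A \<noteq> {}"
  proof -
    from ne obtain b where b: "b \<in> set cr" "vload x b < 1" by blast
    then obtain i where "i < length cr" "cr!i = b" by (auto simp: in_set_conv_nth)
    then have "i \<in> A" using b unfolding A_def by simp
    then show ?thesis by blast
  qed
  define k0 where "k0 = Min A"
  have finA: "finite A" unfolding A_def by simp
  have k0A: "k0 \<in> A" unfolding k0_def using finA \<open>A \<noteq> {}\<close> by (rule Min_in)
  have k0min: "\<And>k. k \<in> A \<Longrightarrow> k0 \<le> k" unfolding k0_def using finA by simp
  have zero: "\<And>k. k < length cr \<Longrightarrow> k \<noteq> k0 \<Longrightarrow> h (cr!k) = 0"
  proof -
    fix k assume k: "k < length cr" "k \<noteq> k0"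
    show "h (cr!k) = 0"
    proof (cases "vload x (cr!k) < 1")
      case True
      then have "k \<in> A" using k unfolding A_def by simp
      then have "k0 < k" using k0min k by fastforce
      have "\<not> 0 < snd (cr!k)"
      proof
        assume "0 < snd (cr!k)"
        then have "1 \<le> vload x (cr!k0)" using pr k \<open>k0 < k\<close> unfolding prefI_def by blast
        then show False using k0A unfolding A_def by simp
      qed
      moreover have "0 \<le> snd (cr!k)" using bo k unfolding bigok_def by (meson nth_mem)
      ultimately show ?thesis unfolding h_def by simp
    next
      case False then show ?thesis unfolding h_def by simp
    qed
  qed
  have k0l: "k0 < length cr" using k0A unfolding A_def by simp
  have "nfSnd x cr = (\<Sum>k = 0..<length cr. h (cr!k))"
    unfolding nfSnd_def sumL_def h_def by (simp add: sum_list_sum_nth)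
  also have "\<dots> = h (cr!k0) + (\<Sum>k \<in> {0..<length cr} - {k0}. h (cr!k))"
    using k0l by (subst sum.remove[of _ k0]) auto
  also have "(\<Sum>k \<in> {0..<length cr} - {k0}. h (cr!k)) = 0"
    using zero by (intro sum.neutral) auto
  also have "h (cr!k0) = snd (cr!k0)" using k0A unfolding A_def h_def by simp
  also have "snd (cr!k0) < 1 - x"
    using nf_snd[of x "cr!k0"] bo k0A k0l unfolding A_def by simp
  finally show ?thesis by simp
qed

lemma nSome_all:
  assumes "nSome cr = of_nat (length cr)" shows "\<forall>b\<in>set cr. fst b \<noteq> None"
proof (rule ccontr)
  assume "\<not> (\<forall>b\<in>set cr. fst b \<noteq> None)"
  then have "\<exists>b\<in>set cr. fst b = None" by auto
  from sumL_ind_lt[OF this] show False using assms unfolding nSome_def by simp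
qed

lemma cntP_len: "cntP P xs (length xs) = length (filter P xs)"
  unfolding cntP_def by (simp add: length_filter_conv_card)

lemma xm_props:
  fixes xs :: "rat list"
  assumes items: "\<forall>v\<in>set xs. 0 < v \<and> v < 1" and mle: "m \<le> n_two_items xs"
  shows "1/2 \<le> xm_of xs m" "xm_of xs m \<le> 1" "1 \<le> m \<Longrightarrow> xm_of xs m < 1"
    "m \<le> cntP (gex (xm_of xs m)) xs (length xs)"
proof -
  have mlen: "m \<le> length xs" using mle unfolding n_two_items_def by (meson le_trans length_filter_le)
  show "1/2 \<le> xm_of xs m"
  proof (cases "m = 0")
    case True then show ?thesis unfolding xm_of_def by simp
  next
    case False
    have "m \<le> length (filter (\<lambda>v. 1/2 \<le> v) xs)" using mle unfolding n_two_items_def .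
    from xm_lower[OF _ this] False show ?thesis by simp
  qed
  show "1 \<le> m \<Longrightarrow> xm_of xs m < 1" using xm_in_set[of m xs] mlen items by auto
  then show "xm_of xs m \<le> 1" unfolding xm_of_def by (cases "m = 0") auto
  show "m \<le> cntP (gex (xm_of xs m)) xs (length xs)"
  proof (cases "m = 0")
    case True then show ?thesis by simp
  next
    case False
    then show ?thesis unfolding cntP_len gex_def using xm_ge_count[of m xs] mlen by simp
  qed
qed

lemma run_facts:
  fixes xs :: "rat list"
  assumes items: "\<forall>v\<in>set xs. 0 < v \<and> v < 1" and mle: "m \<le> n_two_items xs"
  shows "\<exists>F c2' c3' c4' csb Scrit.
     dh_run 4 xs m = F + c2' + c3' + c4' + csb \<and> F = Fc xs m \<and> F \<le> m \<and>
     of_nat (cntP c2 xs (length xs)) - of_nat m \<le> 2 * of_nat c2' + (1::rat) \<and>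
     of_nat (cntP c3 xs (length xs)) \<le> 3 * of_nat c3' + (2::rat) \<and>
     of_nat (cntP c4 xs (length xs)) \<le> 4 * of_nat c4' + (3::rat) \<and>
     Ssum xs (length xs) - Scrit \<le> 5/4 * of_nat csb + 1 \<and> Scrit \<le> Ssum xs (length xs) \<and>
     Scrit \<le> of_nat m * (5/4 - xm_of xs m) \<and>
     (F < m \<longrightarrow> (\<exists>CL \<subseteq> sml xs (length xs). card CL \<le> F \<and>
        (\<Sum>i\<in>sml xs (length xs) - CL. xs!i) < (of_nat F + 1) * (1 - xm_of xs m)))"
proof -
  define x where "x = xm_of xs m"
  note xp = xm_props[OF items mle, folded x_def]
  obtain cr tb sb where st: "fold (dh_step 4 x) xs (replicate m (None, 0), (\<lambda>_. (0, 0)), (0, 0)) = (cr, tb, sb)"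
    by (metis prod_cases3)
  have "inv xs x m (length xs) (cr, tb, sb)"
    using inv_fold[OF items xp(1) xp(2), of "length xs" m] st by simp
  note I = this[unfolded inv_simp]
  have ns: "nSome cr = of_nat m" using I xp(4) by (simp add: min_absorb1)
  have "nSome cr = of_nat (length cr)" using ns I by auto
  then have allS: "\<forall>b\<in>set cr. fst b \<noteq> None" by (rule nSome_all)
  have al: "\<And>b. b \<in> set cr \<Longrightarrow> aload b = vload x b"
    using allS unfolding aload_def vload_def by fastforce
  define F where "F = length (filter (\<lambda>b. 1 \<le> aload b) cr)"
  have Fv: "F = length (filter (\<lambda>b. 1 \<le> vload x b) cr)" unfolding F_def using al
    by (metis (mono_tags, lifting) filter_cong)
  have nF: "nFull x cr = of_nat F" unfolding nFull_def Fv by (rule sumL_count)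
  have Fm: "F \<le> m" unfolding F_def using I by (metis length_filter_le)
  have FFc: "F = Fc xs m" unfolding Fc_def F_def x_def[symmetric] st by simp
  have e24: "{2..4::nat} = {2,3,4}" by auto
  have run: "dh_run 4 xs m = F + snd (tb 2) + snd (tb 3) + snd (tb 4) + snd sb"
    unfolding dh_run_def x_def[symmetric] st F_def by (simp add: e24)
  have d2: "of_nat (cntP c2 xs (length xs)) - of_nat m \<le> 2 * of_nat (snd (tb 2)) + (1::rat)"
    using dnf_final[of 2 "tb 2"] I ns by auto
  have d3: "of_nat (cntP c3 xs (length xs)) \<le> 3 * of_nat (snd (tb 3)) + (2::rat)"
    using dnf_final[of 3 "tb 3"] I by auto
  have d4: "of_nat (cntP c4 xs (length xs)) \<le> 4 * of_nat (snd (tb 4)) + (3::rat)"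
    using dnf_final[of 4 "tb 4"] I by auto
  have sb1: "Ssum xs (length xs) - sSnd cr \<le> 5/4 * of_nat (snd sb) + 1" using I by auto
  have sb2: "sSnd cr \<le> Ssum xs (length xs)" using I by auto
  have sc: "sSnd cr \<le> of_nat m * (5/4 - x)"
  proof -
    have "sSnd cr \<le> sumL (\<lambda>b. 5/4 - x) cr" unfolding sSnd_def
      by (rule sumL_le) (use I in \<open>auto simp: bigok_def\<close>)
    then show ?thesis using I by (simp add: sumL_const)
  qed
  have cl: "F < m \<longrightarrow> (\<exists>CL \<subseteq> sml xs (length xs). card CL \<le> F \<and>
        (\<Sum>i\<in>sml xs (length xs) - CL. xs!i) < (of_nat F + 1) * (1 - x))"
  proof
    assume "F < m"
    have ne: "\<exists>b\<in>set cr. vload x b < 1"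
    proof (rule ccontr)
      assume "\<not> (\<exists>b\<in>set cr. vload x b < 1)"
      then have "filter (\<lambda>b. 1 \<le> vload x b) cr = cr" by (auto simp: not_less)
      then show False using \<open>F < m\<close> Fv I by simp
    qed
    from I obtain CL where CL: "CL \<subseteq> sml xs (length xs)" "of_nat (card CL) \<le> nFull x cr"
      "(\<exists>b\<in>set cr. vload x b < 1) \<longrightarrow> (\<Sum>i\<in>sml xs (length xs) - CL. xs!i) \<le> nFull x cr * (1 - x) + nfSnd x cr"
      unfolding clI_def by blast
    have "nfSnd x cr < 1 - x" using nfSnd_lt ne I by blast
    then have "(\<Sum>i\<in>sml xs (length xs) - CL. xs!i) < (of_nat F + 1) * (1 - x)"
      using CL(3) ne nF by (simp add: algebra_simps)
    moreover have "card CL \<le> F" using CL(2) nF by simp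
    ultimately show "\<exists>CL \<subseteq> sml xs (length xs). card CL \<le> F \<and>
        (\<Sum>i\<in>sml xs (length xs) - CL. xs!i) < (of_nat F + 1) * (1 - x)" using CL(1) by blast
  qed
  show ?thesis
    apply (rule exI[of _ F], rule exI[of _ "snd (tb 2)"], rule exI[of _ "snd (tb 3)"], rule exI[of _ "snd (tb 4)"],
           rule exI[of _ "snd sb"], rule exI[of _ "sSnd cr"])
    using run FFc Fm d2 d3 d4 sb1 sb2 sc cl unfolding x_def by simp
qed



definition binf :: "rat list \<Rightarrow> (nat \<Rightarrow> nat) \<Rightarrow> nat \<Rightarrow> nat set" where
  "binf xs f b = {i. i < length xs \<and> f i = b}"
definition loadf :: "rat list \<Rightarrow> (nat \<Rightarrow> nat) \<Rightarrow> nat \<Rightarrow> rat" where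
  "loadf xs f b = (\<Sum>i\<in>binf xs f b. xs!i)"
definition CB :: "rat list \<Rightarrow> (nat \<Rightarrow> nat) \<Rightarrow> nat set" where
  "CB xs f = {b. 1 \<le> loadf xs f b}"
definition sig :: "rat list \<Rightarrow> (nat \<Rightarrow> nat) \<Rightarrow> nat \<Rightarrow> rat" where
  "sig xs f b = (\<Sum>i\<in>{i\<in>binf xs f b. xs!i < 1/4}. xs!i)"
definition isQ :: "rat list \<Rightarrow> (nat \<Rightarrow> nat) \<Rightarrow> nat \<Rightarrow> bool" where
  "isQ xs f b \<longleftrightarrow> b \<in> CB xs f \<and> (\<exists>i0\<in>binf xs f b. 1/2 \<le> xs!i0 \<and> (\<forall>i\<in>binf xs f b. i \<noteq> i0 \<longrightarrow> xs!i < 1/4)) \<and> sig xs f b < 1/4"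
definition wt :: "rat \<Rightarrow> rat" where
  "wt v = (if 1/2 \<le> v then 3/4 else if 1/3 \<le> v then 1/2 else if 1/4 \<le> v then 3/8 else v)"

lemma binf_fin[simp]: "finite (binf xs f b)" unfolding binf_def by simp

lemma CB_sub: "CB xs f \<subseteq> f ` {..<length xs}"
proof
  fix b assume b: "b \<in> CB xs f"
  show "b \<in> f ` {..<length xs}"
  proof (rule ccontr)
    assume "b \<notin> f ` {..<length xs}"
    then have "binf xs f b = {}" unfolding binf_def by auto
    then show False using b unfolding CB_def loadf_def by simp
  qed
qed

lemma CB_fin[simp]: "finite (CB xs f)" using CB_sub finite_subset by blast

lemma covered_CB: "covered_bins xs f = card (CB xs f)"
  unfolding covered_bins_def CB_def loadf_def binf_def by simp

lemma covered_le: "covered_bins xs f \<le> length xs"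
proof -
  have "card (CB xs f) \<le> card (f ` {..<length xs})" by (rule card_mono) (use CB_sub in auto)
  also have "\<dots> \<le> length xs" using card_image_le[of "{..<length xs}" f] by simp
  finally show ?thesis using covered_CB by simp
qed

lemma opt_attained: "\<exists>f. opt_cover xs = covered_bins xs f"
proof -
  let ?A = "{c. \<exists>f. c = covered_bins xs f}"
  have "?A \<subseteq> {..length xs}" using covered_le by auto
  then have fin: "finite ?A" using finite_subset by blast
  have "?A \<noteq> {}" by auto
  then have "Max ?A \<in> ?A" using fin by (rule Max_in[rotated])
  then show ?thesis unfolding opt_cover_def by blast
qed

lemma opt_ge: "covered_bins xs f \<le> opt_cover xs"
proof -
  let ?A = "{c. \<exists>f. c = covered_bins xs f}"
  have "?A \<subseteq> {..length xs}" using covered_le by auto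
  then have fin: "finite ?A" using finite_subset by blast
  show ?thesis unfolding opt_cover_def by (rule Max_ge[OF fin]) auto
qed

lemma wt_nonneg: "0 < v \<Longrightarrow> 0 \<le> wt v" unfolding wt_def by auto

lemma sum_ind: "finite A \<Longrightarrow> (\<Sum>i\<in>A. if P i then c else 0) = of_nat (card {i\<in>A. P i}) * (c::rat)"
  by (simp add: sum.inter_filter[symmetric])

lemma bin_claim:
  assumes items: "\<forall>v\<in>set xs. 0 < v \<and> v < 1" and b: "b \<in> CB xs f"
  shows "1 \<le> (\<Sum>i\<in>binf xs f b. wt (xs!i)) + (if isQ xs f b then 1/4 - sig xs f b else 0)"
proof -
  let ?B = "binf xs f b"
  have vr: "\<And>i. i \<in> ?B \<Longrightarrow> 0 < xs!i \<and> xs!i < 1" using items unfolding binf_def by auto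
  have wnn: "\<And>i. i \<in> ?B \<Longrightarrow> 0 \<le> wt (xs!i)" using vr wt_nonneg by blast
  have ld: "1 \<le> (\<Sum>i\<in>?B. xs!i)" using b unfolding CB_def loadf_def by simp
  have sub: "\<And>A. A \<subseteq> ?B \<Longrightarrow> (\<Sum>i\<in>A. wt (xs!i)) \<le> (\<Sum>i\<in>?B. wt (xs!i))"
    by (rule sum_mono2) (use wnn in auto)
  have isq0: "0 \<le> (if isQ xs f b then 1/4 - sig xs f b else 0)" unfolding isQ_def by auto
  consider (two) "\<exists>i\<in>?B. \<exists>j\<in>?B. i \<noteq> j \<and> 1/2 \<le> xs!i \<and> 1/2 \<le> xs!j"
    | (mid) "\<exists>i\<in>?B. \<exists>j\<in>?B. 1/2 \<le> xs!i \<and> 1/4 \<le> xs!j \<and> xs!j < 1/2"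
    | (none) "\<forall>i\<in>?B. xs!i < 1/2"
    | (one) i0 where "i0 \<in> ?B" "1/2 \<le> xs!i0" "\<forall>i\<in>?B. i \<noteq> i0 \<longrightarrow> xs!i < 1/4"
    by (metis linorder_not_le)
  then show ?thesis
  proof cases
    case two
    then obtain i j where ij: "i \<in> ?B" "j \<in> ?B" "i \<noteq> j" "1/2 \<le> xs!i" "1/2 \<le> xs!j" by blast
    have "(\<Sum>k\<in>{i,j}. wt (xs!k)) = 3/2" using ij unfolding wt_def by simp
    moreover have "(\<Sum>k\<in>{i,j}. wt (xs!k)) \<le> (\<Sum>i\<in>?B. wt (xs!i))" using ij by (intro sub) auto
    ultimately show ?thesis using isq0 by simp
  next
    case mid
    then obtain i j where ij: "i \<in> ?B" "j \<in> ?B" "1/2 \<le> xs!i" "1/4 \<le> xs!j" "xs!j < 1/2" by blast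
    have "i \<noteq> j" using ij by auto
    have "wt (xs!j) \<ge> 3/8" using ij unfolding wt_def by auto
    then have "(\<Sum>k\<in>{i,j}. wt (xs!k)) \<ge> 3/4 + 3/8" using ij \<open>i \<noteq> j\<close> unfolding wt_def by simp
    moreover have "(\<Sum>k\<in>{i,j}. wt (xs!k)) \<le> (\<Sum>i\<in>?B. wt (xs!i))" using ij by (intro sub) auto
    ultimately show ?thesis using isq0 by simp
  next
    case none
    have "(\<Sum>i\<in>?B. xs!i) \<le> (\<Sum>i\<in>?B. wt (xs!i))"
      by (rule sum_mono) (use none in \<open>auto simp: wt_def\<close>)
    then show ?thesis using ld isq0 by simp
  next
    case one
    have sm: "\<And>i. i \<in> ?B - {i0} \<Longrightarrow> xs!i < 1/4" using one by auto
    have "(\<Sum>i\<in>?B. wt (xs!i)) = wt (xs!i0) + (\<Sum>i\<in>?B - {i0}. wt (xs!i))"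
      using one by (subst sum.remove[of _ i0]) auto
    also have "(\<Sum>i\<in>?B - {i0}. wt (xs!i)) = (\<Sum>i\<in>?B - {i0}. xs!i)"
    proof (rule sum.cong)
      fix i assume "i \<in> ?B - {i0}"
      then have "xs!i < 1/4" by (rule sm)
      then show "wt (xs!i) = xs!i" unfolding wt_def by simp
    qed simp
    also have "wt (xs!i0) = 3/4" using one unfolding wt_def by simp
    finally have sw: "(\<Sum>i\<in>?B. wt (xs!i)) = 3/4 + (\<Sum>i\<in>?B - {i0}. xs!i)" .
    have "{i\<in>?B. xs!i < 1/4} = ?B - {i0}" using one by auto
    then have sg: "sig xs f b = (\<Sum>i\<in>?B - {i0}. xs!i)" unfolding sig_def by simp
    show ?thesis
    proof (cases "sig xs f b < 1/4")
      case True
      then have "isQ xs f b" unfolding isQ_def using b one by blast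
      then show ?thesis using sw sg by simp
    next
      case False
      then show ?thesis using sw sg isq0 by simp
    qed
  qed
qed

lemma wt_sum:
  assumes items: "\<forall>v\<in>set xs. 0 < v \<and> v < 1"
  shows "(\<Sum>i<length xs. wt (xs!i)) = 3/4 * of_nat (cntP c2 xs (length xs)) + 1/2 * of_nat (cntP c3 xs (length xs))
      + 3/8 * of_nat (cntP c4 xs (length xs)) + Ssum xs (length xs)"
proof -
  have e: "\<And>i. i < length xs \<Longrightarrow> wt (xs!i) = (if c2 (xs!i) then 3/4 else 0) + (if c3 (xs!i) then 1/2 else 0)
     + (if c4 (xs!i) then 3/8 else 0) + (if xs!i < 1/4 then xs!i else 0)"
  proof -
    fix i assume "i < length xs"
    then have "xs!i \<in> set xs" by simp
    then have "0 < xs!i" "xs!i < 1" using items by auto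
    then show "?thesis i" unfolding wt_def c2_def c3_def c4_def by auto
  qed
  have "(\<Sum>i<length xs. wt (xs!i)) = (\<Sum>i<length xs. (if c2 (xs!i) then 3/4 else 0) + (if c3 (xs!i) then 1/2 else 0)
     + (if c4 (xs!i) then 3/8 else 0) + (if xs!i < 1/4 then xs!i else 0))"
    by (rule sum.cong) (use e in auto)
  also have "\<dots> = (\<Sum>i<length xs. if c2 (xs!i) then 3/4 else 0) + (\<Sum>i<length xs. if c3 (xs!i) then 1/2 else 0)
     + (\<Sum>i<length xs. if c4 (xs!i) then 3/8 else 0) + (\<Sum>i<length xs. if xs!i < 1/4 then xs!i else 0)"
    by (simp add: sum.distrib)
  also have "(\<Sum>i<length xs. if xs!i < 1/4 then xs!i else 0) = Ssum xs (length xs)"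
    unfolding Ssum_def sml_def by (simp add: sum.inter_filter[symmetric] lessThan_def)
  finally have A: "(\<Sum>i<length xs. wt (xs!i)) = (\<Sum>i<length xs. if c2 (xs!i) then 3/4 else 0) + (\<Sum>i<length xs. if c3 (xs!i) then 1/2 else 0)
     + (\<Sum>i<length xs. if c4 (xs!i) then 3/8 else 0) + Ssum xs (length xs)" .
  have gen: "\<And>P c. (\<Sum>i<length xs. if P (xs!i) then c else 0) = of_nat (cntP P xs (length xs)) * (c::rat)"
    unfolding cntP_def by (simp add: sum_ind lessThan_def)
  show ?thesis unfolding A gen by (simp add: algebra_simps)
qed



lemma grp: "finite S \<Longrightarrow> finite T \<Longrightarrow> (\<And>i. i \<in> S \<Longrightarrow> f i \<in> T) \<Longrightarrow>
   (\<Sum>b\<in>T. \<Sum>i\<in>{i\<in>S. f i = b}. h i) = (\<Sum>i\<in>S. (h i :: rat))"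
  by (rule sum.group) auto

definition Qs :: "rat list \<Rightarrow> (nat \<Rightarrow> nat) \<Rightarrow> nat set" where "Qs xs f = {b. isQ xs f b}"
definition SQ :: "rat list \<Rightarrow> (nat \<Rightarrow> nat) \<Rightarrow> rat" where
  "SQ xs f = (\<Sum>i\<in>{i\<in>sml xs (length xs). f i \<in> Qs xs f}. xs!i)"

lemma Qs_CB: "Qs xs f \<subseteq> CB xs f" unfolding Qs_def isQ_def by auto
lemma Qs_fin[simp]: "finite (Qs xs f)" using Qs_CB CB_fin finite_subset by blast

lemma sig_SQ: "(\<Sum>b\<in>Qs xs f. sig xs f b) = SQ xs f"
proof -
  have "(\<Sum>b\<in>Qs xs f. sig xs f b) = (\<Sum>b\<in>Qs xs f. \<Sum>i\<in>{i\<in>{i\<in>sml xs (length xs). f i \<in> Qs xs f}. f i = b}. xs!i)"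
  proof (rule sum.cong)
    fix b assume b: "b \<in> Qs xs f"
    have "{i\<in>binf xs f b. xs!i < 1/4} = {i\<in>{i\<in>sml xs (length xs). f i \<in> Qs xs f}. f i = b}"
      using b unfolding binf_def sml_def by auto
    then show "sig xs f b = (\<Sum>i\<in>{i\<in>{i\<in>sml xs (length xs). f i \<in> Qs xs f}. f i = b}. xs!i)"
      unfolding sig_def by simp
  qed simp
  also have "\<dots> = SQ xs f" unfolding SQ_def by (rule grp) auto
  finally show ?thesis .
qed

lemma opt_bound:
  assumes items: "\<forall>v\<in>set xs. 0 < v \<and> v < 1"
  shows "of_nat (covered_bins xs f) \<le> 3/4 * of_nat (cntP c2 xs (length xs)) + 1/2 * of_nat (cntP c3 xs (length xs))
      + 3/8 * of_nat (cntP c4 xs (length xs)) + Ssum xs (length xs) + of_nat (card (Qs xs f)) / 4 - SQ xs f"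
proof -
  let ?C = "CB xs f"
  let ?h = "\<lambda>b. (\<Sum>i\<in>binf xs f b. wt (xs!i)) + (if isQ xs f b then 1/4 - sig xs f b else 0)"
  have "of_nat (covered_bins xs f) = (\<Sum>b\<in>?C. (1::rat))" unfolding covered_CB by simp
  also have "\<dots> \<le> (\<Sum>b\<in>?C. ?h b)" by (rule sum_mono) (use bin_claim[OF items] in auto)
  also have "\<dots> = (\<Sum>b\<in>?C. \<Sum>i\<in>binf xs f b. wt (xs!i)) + (\<Sum>b\<in>?C. if isQ xs f b then 1/4 - sig xs f b else 0)"
    by (simp add: sum.distrib)
  also have "(\<Sum>b\<in>?C. if isQ xs f b then 1/4 - sig xs f b else 0) = (\<Sum>b\<in>Qs xs f. 1/4 - sig xs f b)"
  proof -
    have "{b\<in>?C. isQ xs f b} = Qs xs f" unfolding Qs_def isQ_def by auto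
    then show ?thesis using sum.inter_filter[of ?C "\<lambda>b. 1/4 - sig xs f b" "isQ xs f", symmetric] by simp
  qed
  also have "(\<Sum>b\<in>Qs xs f. 1/4 - sig xs f b) = of_nat (card (Qs xs f)) / 4 - SQ xs f"
    using sig_SQ[of xs f] by (simp add: sum_subtractf)
  also have "(\<Sum>b\<in>?C. \<Sum>i\<in>binf xs f b. wt (xs!i)) = (\<Sum>i\<in>{i\<in>{..<length xs}. f i \<in> ?C}. wt (xs!i))"
  proof -
    have "(\<Sum>b\<in>?C. \<Sum>i\<in>binf xs f b. wt (xs!i)) = (\<Sum>b\<in>?C. \<Sum>i\<in>{i\<in>{i\<in>{..<length xs}. f i \<in> ?C}. f i = b}. wt (xs!i))"
      by (rule sum.cong) (auto simp: binf_def intro!: sum.cong)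
    also have "\<dots> = (\<Sum>i\<in>{i\<in>{..<length xs}. f i \<in> ?C}. wt (xs!i))" by (rule grp) auto
    finally show ?thesis .
  qed
  also have "(\<Sum>i\<in>{i\<in>{..<length xs}. f i \<in> ?C}. wt (xs!i)) \<le> (\<Sum>i<length xs. wt (xs!i))"
  proof (rule sum_mono2)
    show "\<And>i. i \<in> {..<length xs} - {i\<in>{..<length xs}. f i \<in> ?C} \<Longrightarrow> 0 \<le> wt (xs!i)"
    proof -
      fix i assume "i \<in> {..<length xs} - {i\<in>{..<length xs}. f i \<in> ?C}"
      then have "xs!i \<in> set xs" by auto
      then show "0 \<le> wt (xs!i)" using items wt_nonneg by blast
    qed
  qed auto
  finally show ?thesis using wt_sum[OF items] by simp
qed

lemma Q_beta:
  assumes items: "\<forall>v\<in>set xs. 0 < v \<and> v < 1" and b: "b \<in> Qs xs f"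
  shows "\<exists>i0. i0 < length xs \<and> f i0 = b \<and> 1/2 \<le> xs!i0 \<and> 1 \<le> xs!i0 + sig xs f b \<and> sig xs f b < 1/4"
proof -
  let ?B = "binf xs f b"
  from b obtain i0 where one: "i0 \<in> ?B" "1/2 \<le> xs!i0" "\<forall>i\<in>?B. i \<noteq> i0 \<longrightarrow> xs!i < 1/4"
    and cb: "b \<in> CB xs f" and sg4: "sig xs f b < 1/4"
    unfolding Qs_def isQ_def by blast
  have "{i\<in>?B. xs!i < 1/4} = ?B - {i0}" using one by auto
  then have sg: "sig xs f b = (\<Sum>i\<in>?B - {i0}. xs!i)" unfolding sig_def by simp
  have "loadf xs f b = xs!i0 + (\<Sum>i\<in>?B - {i0}. xs!i)" unfolding loadf_def
    using one by (subst sum.remove[of _ i0]) auto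
  then have "1 \<le> xs!i0 + sig xs f b" using cb sg unfolding CB_def by simp
  then show ?thesis using one sg4 unfolding binf_def by blast
qed

definition beta :: "rat list \<Rightarrow> (nat \<Rightarrow> nat) \<Rightarrow> nat \<Rightarrow> nat" where
  "beta xs f b = (SOME i0. i0 < length xs \<and> f i0 = b \<and> 1/2 \<le> xs!i0 \<and> 1 \<le> xs!i0 + sig xs f b \<and> sig xs f b < 1/4)"

lemma beta_props:
  assumes items: "\<forall>v\<in>set xs. 0 < v \<and> v < 1" and b: "b \<in> Qs xs f"
  shows "beta xs f b < length xs" "f (beta xs f b) = b" "1/2 \<le> xs!(beta xs f b)"
    "1 \<le> xs!(beta xs f b) + sig xs f b" "sig xs f b < 1/4"
  using someI_ex[OF Q_beta[OF items b]] unfolding beta_def by auto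

lemma beta_inj: "\<forall>v\<in>set xs. 0 < v \<and> v < 1 \<Longrightarrow> inj_on (beta xs f) (Qs xs f)"
  by (rule inj_onI) (metis beta_props(2))

lemma card_Q_P:
  assumes items: "\<forall>v\<in>set xs. 0 < v \<and> v < 1"
  shows "card {b\<in>Qs xs f. P (xs!(beta xs f b))} \<le> cntP P xs (length xs)"
proof -
  have "card {b\<in>Qs xs f. P (xs!(beta xs f b))} = card (beta xs f ` {b\<in>Qs xs f. P (xs!(beta xs f b))})"
    using beta_inj[OF items] by (intro card_image[symmetric]) (auto intro: inj_on_subset)
  also have "\<dots> \<le> card {i. i < length xs \<and> P (xs!i)}"
    by (rule card_mono) (use beta_props[OF items] in auto)
  finally show ?thesis unfolding cntP_def .
qed

lemma sig_nonneg: "\<forall>v\<in>set xs. 0 < v \<and> v < 1 \<Longrightarrow> 0 \<le> sig xs f b"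
  unfolding sig_def binf_def
proof (rule sum_nonneg)
  fix i assume a: "\<forall>v\<in>set xs. 0 < v \<and> v < 1" "i \<in> {i \<in> {i. i < length xs \<and> f i = b}. xs ! i < 1 / 4}"
  then have "xs!i \<in> set xs" by auto
  then show "0 \<le> xs!i" using a(1) by fastforce
qed



lemma count_R:
  fixes xs :: "rat list" and x' :: rat
  assumes items: "\<forall>v\<in>set xs. 0 < v \<and> v < 1" and x1: "x' < 1"
    and Fm: "F + 1 \<le> m'" and mq: "m' \<le> card (Qs xs f)"
    and CL: "CL \<subseteq> sml xs (length xs)" "card CL \<le> F"
    and NC: "(\<Sum>i\<in>sml xs (length xs) - CL. xs!i) < (of_nat F + 1) * (1 - x')"
    and gt: "card {b\<in>Qs xs f. x' < xs!(beta xs f b)} \<le> m' - 1"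
  shows "Ssum xs (length xs) - SQ xs f \<le> (2 * of_nat F + of_nat m' - of_nat (card (Qs xs f))) / 4"
proof -
  define n where "n = length xs"
  define Sm where "Sm = sml xs n"
  define Q where "Q = Qs xs f"
  define q where "q = card Q"
  define \<tau> where "\<tau> = 1 - x'"
  have tpos: "0 < \<tau>" unfolding \<tau>_def using x1 by simp
  have finSm: "finite Sm" unfolding Sm_def by simp
  have vnn: "\<And>i. i \<in> Sm \<Longrightarrow> 0 \<le> xs!i \<and> xs!i < 1/4"
  proof -
    fix i assume "i \<in> Sm"
    then have "i < length xs" "xs!i < 1/4" unfolding Sm_def sml_def n_def by auto
    moreover then have "xs!i \<in> set xs" by simp
    ultimately show "0 \<le> xs!i \<and> xs!i < 1/4" using items by fastforce
  qed
  define G where "G = {b\<in>Q. xs!(beta xs f b) \<le> x'}"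
  define QG where "QG = {b\<in>Q. x' < xs!(beta xs f b)}"
  have finQ: "finite Q" unfolding Q_def by simp
  have QGU: "Q = G \<union> QG" "G \<inter> QG = {}" unfolding G_def QG_def by auto
  have cQ: "q = card G + card QG" unfolding q_def using QGU finQ
    by (metis card_Un_disjoint finite_Un)
  have cQG: "card QG \<le> m' - 1" using gt unfolding QG_def Q_def .
  have cG: "q - (m' - 1) \<le> card G" using cQ cQG by linarith
  have finCL: "finite CL" using CL(1) finite_subset by fastforce
  define CLQ where "CLQ = {i\<in>CL. f i \<in> Q}"
  define CLO where "CLO = {i\<in>CL. f i \<notin> Q}"
  have cCL: "card CLQ + card CLO = card CL"
  proof -
    have "CL = CLQ \<union> CLO" "CLQ \<inter> CLO = {}" unfolding CLQ_def CLO_def by auto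
    then show ?thesis using finCL by (metis card_Un_disjoint finite_Un)
  qed
  define H where "H = {b\<in>G. \<exists>i\<in>CL. f i = b}"
  have HG: "H \<subseteq> G" unfolding H_def by auto
  have finG: "finite G" using finQ QGU by simp
  have cH: "card H \<le> card CLQ"
  proof -
    have "H \<subseteq> f ` CLQ" unfolding H_def CLQ_def G_def by auto
    then have "card H \<le> card (f ` CLQ)" by (rule card_mono[rotated]) (use finCL CLQ_def in simp)
    also have "\<dots> \<le> card CLQ" by (rule card_image_le) (use finCL CLQ_def in simp)
    finally show ?thesis .
  qed
  have cGH: "card (G - H) = card G - card H" using HG finG by (simp add: card_Diff_subset finite_subset)
  have sigG: "\<And>b. b \<in> G \<Longrightarrow> \<tau> \<le> sig xs f b \<and> sig xs f b < 1/4"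
  proof -
    fix b assume b: "b \<in> G"
    then have bQ: "b \<in> Qs xs f" unfolding G_def Q_def by simp
    note bp = beta_props[OF items bQ]
    show "\<tau> \<le> sig xs f b \<and> sig xs f b < 1/4" using bp(4,5) b unfolding G_def \<tau>_def by simp
  qed
  have t4: "\<tau> \<le> 1/4"
  proof -
    have "card G \<ge> 1" using cG mq Fm unfolding q_def Q_def by linarith
    then obtain b where "b \<in> G" by (metis card.empty ex_in_conv not_one_le_zero)
    then show ?thesis using sigG by fastforce
  qed
  define A1 where "A1 = {i\<in>Sm. f i \<in> G - H}"
  define A2 where "A2 = {i\<in>Sm - CL. f i \<notin> Q}"
  have finA1: "finite A1" "finite A2" unfolding A1_def A2_def using finSm by auto
  have sA1: "(\<Sum>b\<in>G - H. sig xs f b) = (\<Sum>i\<in>A1. xs!i)"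
  proof -
    have "(\<Sum>b\<in>G - H. sig xs f b) = (\<Sum>b\<in>G - H. \<Sum>i\<in>{i\<in>A1. f i = b}. xs!i)"
    proof (rule sum.cong)
      fix b assume b: "b \<in> G - H"
      have "{i\<in>binf xs f b. xs!i < 1/4} = {i\<in>A1. f i = b}"
        using b unfolding binf_def A1_def Sm_def sml_def n_def by auto
      then show "sig xs f b = (\<Sum>i\<in>{i\<in>A1. f i = b}. xs!i)" unfolding sig_def by simp
    qed simp
    also have "\<dots> = (\<Sum>i\<in>A1. xs!i)" by (rule grp) (use finA1 finG in \<open>auto simp: A1_def\<close>)
    finally show ?thesis .
  qed
  have a1ge: "of_nat (card (G - H)) * \<tau> \<le> (\<Sum>i\<in>A1. xs!i)"
  proof -
    have "(\<Sum>b\<in>G - H. \<tau>) \<le> (\<Sum>b\<in>G - H. sig xs f b)" by (rule sum_mono) (use sigG in auto)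
    then show ?thesis using sA1 by simp
  qed
  have A12: "A1 \<inter> A2 = {}" "A1 \<union> A2 \<subseteq> Sm - CL"
    unfolding A1_def A2_def H_def G_def by auto
  have a12: "(\<Sum>i\<in>A1. xs!i) + (\<Sum>i\<in>A2. xs!i) \<le> (\<Sum>i\<in>Sm - CL. xs!i)"
  proof -
    have "(\<Sum>i\<in>A1. xs!i) + (\<Sum>i\<in>A2. xs!i) = (\<Sum>i\<in>A1 \<union> A2. xs!i)"
      using A12(1) finA1 by (simp add: sum.union_disjoint)
    also have "\<dots> \<le> (\<Sum>i\<in>Sm - CL. xs!i)"
      by (rule sum_mono2) (use A12(2) finSm vnn in auto)
    finally show ?thesis .
  qed
  have a2nn: "0 \<le> (\<Sum>i\<in>A2. xs!i)" by (rule sum_nonneg) (use vnn in \<open>auto simp: A2_def\<close>)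
  have CLS: "CL \<subseteq> Sm" unfolding Sm_def n_def using CL(1) .
  have CLOs: "CLO \<subseteq> Sm" unfolding CLO_def Sm_def n_def using CL(1) by auto
  have finCLO: "finite CLO" using finCL CLO_def by simp
  have cle: "(\<Sum>i\<in>CLO. xs!i) \<le> of_nat (card CLO) / 4"
  proof -
    have "(\<Sum>i\<in>CLO. xs!i) \<le> (\<Sum>i\<in>CLO. 1/4)" by (rule sum_mono) (use vnn CLOs in fastforce)
    then show ?thesis by simp
  qed
  have Rsplit: "Ssum xs n - SQ xs f = (\<Sum>i\<in>A2. xs!i) + (\<Sum>i\<in>CLO. xs!i)"
  proof -
    have "{i\<in>Sm. f i \<notin> Q} = A2 \<union> CLO" "A2 \<inter> CLO = {}"
      unfolding A2_def CLO_def using CLS by auto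
    then have r: "(\<Sum>i\<in>{i\<in>Sm. f i \<notin> Q}. xs!i) = (\<Sum>i\<in>A2. xs!i) + (\<Sum>i\<in>CLO. xs!i)"
      using finA1 finCLO by (simp add: sum.union_disjoint)
    have "Sm = {i\<in>Sm. f i \<in> Q} \<union> {i\<in>Sm. f i \<notin> Q}" "{i\<in>Sm. f i \<in> Q} \<inter> {i\<in>Sm. f i \<notin> Q} = {}" by auto
    then have "Ssum xs n = (\<Sum>i\<in>{i\<in>Sm. f i \<in> Q}. xs!i) + (\<Sum>i\<in>{i\<in>Sm. f i \<notin> Q}. xs!i)"
      unfolding Ssum_def Sm_def[symmetric] using finSm by (metis (no_types, lifting) finite_Un sum.union_disjoint)
    moreover have "SQ xs f = (\<Sum>i\<in>{i\<in>Sm. f i \<in> Q}. xs!i)" unfolding SQ_def Sm_def Q_def n_def ..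
    ultimately show ?thesis using r by simp
  qed
  have NC': "(\<Sum>i\<in>Sm - CL. xs!i) < (of_nat F + 1) * \<tau>" using NC unfolding Sm_def n_def \<tau>_def .
  define P :: rat where "P = of_nat F + of_nat (card CLQ) + of_nat m' - of_nat q"
  have cGH': "of_nat q - of_nat m' + 1 - of_nat (card CLQ) \<le> (of_nat (card (G - H)) :: rat)"
  proof -
    have "q - (m' - 1) - card CLQ \<le> card (G - H)" using cGH cG cH by linarith
    then have "(of_nat (q - (m' - 1) - card CLQ) :: rat) \<le> of_nat (card (G - H))" by simp
    moreover have "(of_nat q - of_nat m' + 1 - of_nat (card CLQ) :: rat) \<le> of_nat (q - (m' - 1) - card CLQ)"
      using Fm by (simp add: of_nat_diff)
    ultimately show ?thesis by linarith
  qed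
  have "(of_nat q - of_nat m' + 1 - of_nat (card CLQ)) * \<tau> \<le> of_nat (card (G - H)) * \<tau>"
    using cGH' tpos by (simp add: mult_right_mono)
  then have a2lt: "(\<Sum>i\<in>A2. xs!i) < P * \<tau>" using a1ge a12 NC' unfolding P_def by (simp add: algebra_simps)
  then have "0 < P * \<tau>" using a2nn by linarith
  then have Ppos: "0 < P" using tpos by (simp add: zero_less_mult_iff)
  have "P * \<tau> \<le> P * (1/4)" using t4 Ppos by (simp add: mult_left_mono)
  then have "(\<Sum>i\<in>A2. xs!i) \<le> P / 4" using a2lt by simp
  then have "Ssum xs n - SQ xs f \<le> P / 4 + of_nat (card CLO) / 4" using Rsplit cle by simp
  moreover have "(of_nat (card CLQ) + of_nat (card CLO) :: rat) \<le> of_nat F" using cCL CL(2)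
    by (metis of_nat_add of_nat_le_iff)
  ultimately show ?thesis unfolding P_def q_def Q_def n_def by (simp add: field_simps)
qed



lemma arithB: "\<lbrakk>(A::rat) \<le> D; A = ms + d2 + d3 + d4 + cs;
  N2 - ms \<le> 2*d2 + 1; N3 \<le> 3*d3+2; N4 \<le> 4*d4+3; S - Sc \<le> 5/4*cs + 1; Sc \<le> S;
  OQ \<le> 3/4*N2 + 1/2*N3 + 3/8*N4 + S + q/4 - YQ; 0 \<le> YQ; S - YQ \<le> (3*ms+1-q)/4\<rbrakk> \<Longrightarrow> 2/3*OQ - 173/60 \<le> D"
  by (simp add: field_simps)
lemma arithA: "\<lbrakk>(A::rat) \<le> D; A = ms + d2 + d3 + d4 + cs;
  N2 - ms \<le> 2*d2 + 1; N3 \<le> 3*d3+2; N4 \<le> 4*d4+3; S - Sc \<le> 5/4*cs + 1; Sc \<le> S;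
  OQ \<le> 3/4*N2 + 1/2*N3 + 3/8*N4 + S + q/4 - YQ; 0 \<le> YQ; ms = q; Sc \<le> q/2\<rbrakk> \<Longrightarrow> 2/3*OQ - 173/60 \<le> D"
  by (simp add: field_simps)

theorem lemma2:
  fixes xs :: "rat list"
  assumes "\<forall>v\<in>set xs. 0 < v \<and> v < 1"
  shows "of_nat (dh_advice 4 xs) \<ge> (2/3) * of_nat (opt_cover xs) - (173/60 :: rat)"
proof -
  note items = assms
  define n where "n = length xs"
  obtain f where f: "opt_cover xs = covered_bins xs f" using opt_attained by blast
  define Q where "Q = Qs xs f"
  define q where "q = card Q"
  have c2e: "c2 = (\<lambda>v. 1/2 \<le> v)" by (rule ext) (simp add: c2_def)
  have n2: "cntP c2 xs n = n_two_items xs" unfolding n_def cntP_len n_two_items_def c2e ..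
  have qn2: "q \<le> n_two_items xs"
  proof -
    have "{b\<in>Qs xs f. c2 (xs!(beta xs f b))} = Q" unfolding Q_def using beta_props(3)[OF items] c2_def by auto
    then show ?thesis using card_Q_P[OF items, of f c2] n2 unfolding q_def n_def by simp
  qed
  define M where "M = {m. m \<le> q \<and> Fc xs m = m}"
  have finM: "finite M" unfolding M_def by simp
  have F0: "Fc xs 0 = 0" using run_facts[OF items, of 0] by auto
  have "0 \<in> M" unfolding M_def using F0 by simp
  then have Mne: "M \<noteq> {}" by blast
  define ms where "ms = Max M"
  have msM: "ms \<in> M" unfolding ms_def using finM Mne by (rule Max_in)
  have msq: "ms \<le> q" "Fc xs ms = ms" using msM unfolding M_def by auto
  have adv: "dh_run 4 xs ms \<le> dh_advice 4 xs"
    unfolding dh_advice_def by (rule Max_ge) (use msq qn2 in auto)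
  obtain F c2' c3' c4' csb Scrit where R:
     "dh_run 4 xs ms = F + c2' + c3' + c4' + csb" "F = Fc xs ms"
     "of_nat (cntP c2 xs n) - of_nat ms \<le> 2 * of_nat c2' + (1::rat)"
     "of_nat (cntP c3 xs n) \<le> 3 * of_nat c3' + (2::rat)"
     "of_nat (cntP c4 xs n) \<le> 4 * of_nat c4' + (3::rat)"
     "Ssum xs n - Scrit \<le> 5/4 * of_nat csb + 1" "Scrit \<le> Ssum xs n"
     "Scrit \<le> of_nat ms * (5/4 - xm_of xs ms)"
    using run_facts[OF items, of ms] msq qn2 unfolding n_def by auto
  have Fms: "F = ms" using R(2) msq by simp
  have opt: "of_nat (opt_cover xs) \<le> 3/4 * of_nat (cntP c2 xs n) + 1/2 * of_nat (cntP c3 xs n)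
      + 3/8 * of_nat (cntP c4 xs n) + Ssum xs n + of_nat q / 4 - SQ xs f"
    using opt_bound[OF items, of f] f unfolding q_def Q_def n_def by simp
  have SQnn: "0 \<le> SQ xs f" unfolding SQ_def
  proof (rule sum_nonneg)
    fix i assume "i \<in> {i \<in> sml xs (length xs). f i \<in> Qs xs f}"
    then have "xs!i \<in> set xs" unfolding sml_def by auto
    then show "0 \<le> xs!i" using items by fastforce
  qed
  have key: "(of_nat ms = (of_nat q::rat) \<and> Scrit \<le> of_nat q / 2) \<or> Ssum xs n - SQ xs f \<le> (3 * of_nat ms + 1 - of_nat q) / 4"
  proof (cases "ms = q")
    case True
    show ?thesis
    proof (cases "q = 0")
      case True
      then show ?thesis using R(8) \<open>ms = q\<close> by simp
    next
      case False
      have "{b\<in>Qs xs f. 3/4 < xs!(beta xs f b)} = Q"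
      proof -
        have "\<And>b. b \<in> Qs xs f \<Longrightarrow> 3/4 < xs!(beta xs f b)"
          using beta_props(4,5)[OF items] by fastforce
        then show ?thesis unfolding Q_def by auto
      qed
      then have "q \<le> cntP (\<lambda>v. 3/4 < v) xs n" using card_Q_P[OF items, of f "\<lambda>v. 3/4 < v"] unfolding q_def n_def by simp
      then have "q \<le> length (filter (\<lambda>v. 3/4 < v) xs)" unfolding n_def cntP_len .
      then have x34: "3/4 < xm_of xs q" using xm_lower_strict[of q "3/4" xs] False by simp
      have "of_nat q * (5/4 - xm_of xs q) \<le> of_nat q * (1/2)"
        using x34 by (intro mult_left_mono) auto
      then show ?thesis using R(8) \<open>ms = q\<close> by simp
    qed
  next
    case False
    then have msl: "ms < q" using msq by simp
    define m' where "m' = Suc ms"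
    have m'q: "m' \<le> q" using msl unfolding m'_def by simp
    have "m' \<notin> M"
    proof
      assume "m' \<in> M"
      then have "m' \<le> ms" unfolding ms_def using finM by simp
      then show False unfolding m'_def by simp
    qed
    then have Fm': "Fc xs m' \<noteq> m'" using m'q unfolding M_def by simp
    obtain F' where R':
      "F' = Fc xs m'" "F' \<le> m'"
      "F' < m' \<longrightarrow> (\<exists>CL \<subseteq> sml xs (length xs). card CL \<le> F' \<and>
        (\<Sum>i\<in>sml xs (length xs) - CL. xs!i) < (of_nat F' + 1) * (1 - xm_of xs m'))"
      using run_facts[OF items, of m'] m'q qn2 by auto
    have F'l: "F' < m'" using R'(1,2) Fm' by simp
    then obtain CL where CL: "CL \<subseteq> sml xs (length xs)" "card CL \<le> F'"
        "(\<Sum>i\<in>sml xs (length xs) - CL. xs!i) < (of_nat F' + 1) * (1 - xm_of xs m')"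
      using R'(3) by blast
    have x1: "xm_of xs m' < 1" using xm_props(3)[OF items, of m'] m'q qn2 unfolding m'_def by simp
    have gt: "card {b\<in>Qs xs f. xm_of xs m' < xs!(beta xs f b)} \<le> m' - 1"
    proof -
      have "card {b\<in>Qs xs f. xm_of xs m' < xs!(beta xs f b)} \<le> cntP (\<lambda>v. xm_of xs m' < v) xs (length xs)"
        by (rule card_Q_P[OF items])
      also have "\<dots> = length (filter (\<lambda>v. xm_of xs m' < v) xs)" by (rule cntP_len)
      also have "\<dots> < m'"
      proof (rule xm_gt_count)
        show "1 \<le> m'" unfolding m'_def by simp
        show "m' \<le> length xs" using m'q qn2 unfolding n_two_items_def by (meson le_trans length_filter_le)
      qed
      finally show ?thesis by simp
    qed
    have "Ssum xs (length xs) - SQ xs f \<le> (2 * of_nat F' + of_nat m' - of_nat (card (Qs xs f))) / 4"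
      by (rule count_R[OF items x1 _ _ CL gt]) (use F'l m'q in \<open>auto simp: q_def Q_def\<close>)
    moreover have "(of_nat F' :: rat) \<le> of_nat ms" using F'l unfolding m'_def by simp
    ultimately have "Ssum xs n - SQ xs f \<le> (3 * of_nat ms + 1 - of_nat q) / 4"
      unfolding n_def q_def Q_def m'_def by (simp add: field_simps)
    then show ?thesis by simp
  qed
  have alg: "(of_nat (dh_run 4 xs ms) :: rat) = of_nat F + of_nat c2' + of_nat c3' + of_nat c4' + of_nat csb"
    using R(1) by simp
  have "(of_nat (dh_run 4 xs ms) :: rat) \<le> of_nat (dh_advice 4 xs)" using adv by simp
  moreover have "(of_nat F :: rat) = of_nat ms" using Fms by simp
  ultimately show ?thesis using key
  proof (elim disjE conjE)
    assume "(of_nat (dh_run 4 xs ms) :: rat) \<le> of_nat (dh_advice 4 xs)" "(of_nat F :: rat) = of_nat ms"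
      "of_nat ms = (of_nat q :: rat)" "Scrit \<le> of_nat q / 2"
    then show ?thesis using arithA[OF _ _ R(3-7) opt SQnn] alg by simp
  next
    assume "(of_nat (dh_run 4 xs ms) :: rat) \<le> of_nat (dh_advice 4 xs)" "(of_nat F :: rat) = of_nat ms"
      "Ssum xs n - SQ xs f \<le> (3 * of_nat ms + 1 - of_nat q) / 4"
    then show ?thesis using arithB[OF _ _ R(3-7) opt SQnn] alg by simp
  qed
qed


end
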